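(* Let $\Sigma$ be a finite polyhedral fan, $\mathcal A=\mathcal A_\Sigma$, and let $\mathcal I$ be a flabby $\mathcal A$-module. If $\eta:\mathcal M\to\mathcal N$ is a strongly injective map of $\mathcal A$-modules and $\mathcal N$ is locally free, then the induced map $\operatorname{Hom}_{\mathcal A}(\mathcal N,\mathcal I)\to\operatorname{Hom}_{\mathcal A}(\mathcal M,\mathcal I)$ is surjective.
   Context: $\mathcal A_\tau$ ($\tau\in\Sigma$) is the graded ring of complex polynomial functions on $\operatorname{Span}\tau$ with linear functions in degree $2$, and restriction maps to faces. An $\mathcal A$-module consists of finitely generated graded $\mathcal A_\tau$-modules $\mathcal M(\tau)$ with degree-$0$ $\mathcal A_\tau$-linear restriction maps $\mathcal M(\tau)\to\mathcal M(\xi)$ for $\xi$ a face of $\tau$, compatible with composition; $\operatorname{Hom}_{\mathcal A}$ denotes degree-$0$ morphisms. $\mathcal M(\partial\sigma)$ is the space of compatible families $(m_\xi)$ over the proper faces $\xi$ of $\sigma$. $\mathcal M$ is locally free if each $\mathcal M(\sigma)$ is free over $\mathcal A_\sigma$, and flabby if each $\mathcal M(\sigma)\to\mathcal M(\partial\sigma)$ is surjective. An injective map $\mathcal M\to\mathcal N$ is strongly injective if for every $\sigma$ the inclusion $\mathcal M(\sigma)\to\mathcal N(\sigma)$ splits (as graded $\mathcal A_\sigma$-modules). *)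

theory Defs
  imports "HOL-Analysis.Polytope" "HOL-Algebra.Module"
begin

definition cface :: "'a::euclidean_space set \<Rightarrow> 'a set \<Rightarrow> bool" where
  "cface \<xi> \<tau> \<longleftrightarrow> \<xi> face_of \<tau> \<and> \<xi> \<noteq> {}"

definition polyhedral_cone :: "'a::euclidean_space set \<Rightarrow> bool" where
  "polyhedral_cone \<sigma> \<longleftrightarrow> polyhedron \<sigma> \<and> cone \<sigma> \<and> \<sigma> \<noteq> {} \<and>
     (\<forall>x. x \<in> \<sigma> \<and> - x \<in> \<sigma> \<longrightarrow> x = 0)"

definition finite_fan :: "'a::euclidean_space set set \<Rightarrow> bool" where
  "finite_fan \<Sigma> \<longleftrightarrow> finite \<Sigma> \<and> (\<forall>\<sigma>\<in>\<Sigma>. polyhedral_cone \<sigma>) \<and>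
     (\<forall>\<sigma>\<in>\<Sigma>. \<forall>\<xi>. cface \<xi> \<sigma> \<longrightarrow> \<xi> \<in> \<Sigma>) \<and>
     (\<forall>\<sigma>\<in>\<Sigma>. \<forall>\<tau>\<in>\<Sigma>. cface (\<sigma> \<inter> \<tau>) \<sigma> \<and> cface (\<sigma> \<inter> \<tau>) \<tau>)"

inductive_set polyfun :: "('a::euclidean_space \<Rightarrow> complex) set" where
  const: "(\<lambda>x. c) \<in> polyfun"
| lin: "(\<lambda>x. complex_of_real (v \<bullet> x)) \<in> polyfun"
| add: "f \<in> polyfun \<Longrightarrow> g \<in> polyfun \<Longrightarrow> (\<lambda>x. f x + g x) \<in> polyfun"
| mult: "f \<in> polyfun \<Longrightarrow> g \<in> polyfun \<Longrightarrow> (\<lambda>x. f x * g x) \<in> polyfun"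

text \<open>A function on \<open>Span \<tau>\<close>, represented as a function on the whole space that is
  zero outside \<open>Span \<tau>\<close>.\<close>
definition rs :: "'a::euclidean_space set \<Rightarrow> ('a \<Rightarrow> complex) \<Rightarrow> 'a \<Rightarrow> complex" where
  "rs \<tau> f = (\<lambda>x. if x \<in> span \<tau> then f x else 0)"

definition A :: "'a::euclidean_space set \<Rightarrow> ('a \<Rightarrow> complex) ring" where
  "A \<tau> = \<lparr> carrier = rs \<tau> ` polyfun,
           mult = (\<lambda>f g x. f x * g x),
           one = rs \<tau> (\<lambda>x. 1),
           zero = (\<lambda>x. 0),
           add = (\<lambda>f g x. f x + g x) \<rparr>"

text \<open>Homogeneous part of degree \<open>d\<close> of \<open>A_\<tau>\<close>; linear functions have degree 2.\<close>
definition Ahom :: "'a::euclidean_space set \<Rightarrow> int \<Rightarrow> ('a \<Rightarrow> complex) set" where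
  "Ahom \<tau> d = {f \<in> carrier (A \<tau>). f = (\<lambda>x. 0) \<or>
      (\<exists>k::nat. d = 2 * int k \<and>
         (\<forall>t::real. \<forall>x\<in>span \<tau>. f (t *\<^sub>R x) = complex_of_real t ^ k * f x))}"

definition graded_module ::
  "('r, 'x) ring_scheme \<Rightarrow> (int \<Rightarrow> 'r set) \<Rightarrow> ('r, 'm) module \<Rightarrow> (int \<Rightarrow> 'm set) \<Rightarrow> bool" where
  "graded_module R Rh M Mh \<longleftrightarrow> Module.module R M \<and>
     (\<forall>d. subgroup (Mh d) (add_monoid M)) \<and>
     (\<forall>d e a m. a \<in> Rh d \<longrightarrow> m \<in> Mh e \<longrightarrow> a \<odot>\<^bsub>M\<^esub> m \<in> Mh (d + e)) \<and>
     (\<forall>x\<in>carrier M. \<exists>!c. (\<forall>d. c d \<in> Mh d) \<and> finite {d. c d \<noteq> \<zero>\<^bsub>M\<^esub>} \<and>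
         x = (\<Oplus>\<^bsub>M\<^esub>d\<in>{d. c d \<noteq> \<zero>\<^bsub>M\<^esub>}. c d))"

definition fin_gen :: "('r, 'x) ring_scheme \<Rightarrow> ('r, 'm) module \<Rightarrow> bool" where
  "fin_gen R M \<longleftrightarrow> (\<exists>G. finite G \<and> G \<subseteq> carrier M \<and>
     (\<forall>x\<in>carrier M. \<exists>a \<in> G \<rightarrow> carrier R. x = (\<Oplus>\<^bsub>M\<^esub>g\<in>G. a g \<odot>\<^bsub>M\<^esub> g)))"

text \<open>Free module (a finitely generated free module has a finite basis).\<close>
definition free_module :: "('r, 'x) ring_scheme \<Rightarrow> ('r, 'm) module \<Rightarrow> bool" where
  "free_module R M \<longleftrightarrow> (\<exists>B. finite B \<and> B \<subseteq> carrier M \<and>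
     (\<forall>x\<in>carrier M. \<exists>!a. a \<in> B \<rightarrow>\<^sub>E carrier R \<and> x = (\<Oplus>\<^bsub>M\<^esub>b\<in>B. a b \<odot>\<^bsub>M\<^esub> b)))"

definition graded_hom ::
  "('r, 'x) ring_scheme \<Rightarrow> ('r, 'm) module \<Rightarrow> (int \<Rightarrow> 'm set) \<Rightarrow>
   ('r, 'n) module \<Rightarrow> (int \<Rightarrow> 'n set) \<Rightarrow> ('m \<Rightarrow> 'n) \<Rightarrow> bool" where
  "graded_hom R M Mh N Nh f \<longleftrightarrow> f \<in> carrier M \<rightarrow> carrier N \<and>
     (\<forall>x\<in>carrier M. \<forall>y\<in>carrier M. f (x \<oplus>\<^bsub>M\<^esub> y) = f x \<oplus>\<^bsub>N\<^esub> f y) \<and>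
     (\<forall>a\<in>carrier R. \<forall>x\<in>carrier M. f (a \<odot>\<^bsub>M\<^esub> x) = a \<odot>\<^bsub>N\<^esub> f x) \<and>
     (\<forall>d. f ` Mh d \<subseteq> Nh d)"

record ('a, 'm) amod =
  Mod :: "'a set \<Rightarrow> ('a \<Rightarrow> complex, 'm) module"
  Deg :: "'a set \<Rightarrow> int \<Rightarrow> 'm set"
  Res :: "'a set \<Rightarrow> 'a set \<Rightarrow> 'm \<Rightarrow> 'm"

definition A_module :: "'a::euclidean_space set set \<Rightarrow> ('a, 'm) amod \<Rightarrow> bool" where
  "A_module \<Sigma> \<M> \<longleftrightarrow>
     (\<forall>\<tau>\<in>\<Sigma>. graded_module (A \<tau>) (Ahom \<tau>) (Mod \<M> \<tau>) (Deg \<M> \<tau>) \<and>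
              fin_gen (A \<tau>) (Mod \<M> \<tau>)) \<and>
     (\<forall>\<tau>\<in>\<Sigma>. \<forall>\<xi>. cface \<xi> \<tau> \<longrightarrow>
        Res \<M> \<tau> \<xi> \<in> carrier (Mod \<M> \<tau>) \<rightarrow> carrier (Mod \<M> \<xi>) \<and>
        (\<forall>x\<in>carrier (Mod \<M> \<tau>). \<forall>y\<in>carrier (Mod \<M> \<tau>).
           Res \<M> \<tau> \<xi> (x \<oplus>\<^bsub>Mod \<M> \<tau>\<^esub> y) = Res \<M> \<tau> \<xi> x \<oplus>\<^bsub>Mod \<M> \<xi>\<^esub> Res \<M> \<tau> \<xi> y) \<and>
        (\<forall>a\<in>carrier (A \<tau>). \<forall>x\<in>carrier (Mod \<M> \<tau>).
           Res \<M> \<tau> \<xi> (a \<odot>\<^bsub>Mod \<M> \<tau>\<^esub> x) = rs \<xi> a \<odot>\<^bsub>Mod \<M> \<xi>\<^esub> Res \<M> \<tau> \<xi> x) \<and>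
        (\<forall>d. Res \<M> \<tau> \<xi> ` Deg \<M> \<tau> d \<subseteq> Deg \<M> \<xi> d)) \<and>
     (\<forall>\<tau>\<in>\<Sigma>. \<forall>x\<in>carrier (Mod \<M> \<tau>). Res \<M> \<tau> \<tau> x = x) \<and>
     (\<forall>\<tau>\<in>\<Sigma>. \<forall>\<xi> \<zeta>. cface \<xi> \<tau> \<longrightarrow> cface \<zeta> \<xi> \<longrightarrow>
        (\<forall>x\<in>carrier (Mod \<M> \<tau>). Res \<M> \<xi> \<zeta> (Res \<M> \<tau> \<xi> x) = Res \<M> \<tau> \<zeta> x))"

definition A_hom :: "'a::euclidean_space set set \<Rightarrow> ('a, 'm) amod \<Rightarrow> ('a, 'n) amod \<Rightarrow>
                     ('a set \<Rightarrow> 'm \<Rightarrow> 'n) \<Rightarrow> bool" where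
  "A_hom \<Sigma> \<M> \<N> f \<longleftrightarrow>
     (\<forall>\<tau>\<in>\<Sigma>. graded_hom (A \<tau>) (Mod \<M> \<tau>) (Deg \<M> \<tau>) (Mod \<N> \<tau>) (Deg \<N> \<tau>) (f \<tau>)) \<and>
     (\<forall>\<tau>\<in>\<Sigma>. \<forall>\<xi>. cface \<xi> \<tau> \<longrightarrow>
        (\<forall>x\<in>carrier (Mod \<M> \<tau>). f \<xi> (Res \<M> \<tau> \<xi> x) = Res \<N> \<tau> \<xi> (f \<tau> x)))"

definition locally_free :: "'a::euclidean_space set set \<Rightarrow> ('a, 'm) amod \<Rightarrow> bool" where
  "locally_free \<Sigma> \<M> \<longleftrightarrow> (\<forall>\<sigma>\<in>\<Sigma>. free_module (A \<sigma>) (Mod \<M> \<sigma>))"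

definition boundary_sections :: "('a::euclidean_space, 'm) amod \<Rightarrow> 'a set \<Rightarrow> ('a set \<Rightarrow> 'm) set" where
  "boundary_sections \<M> \<sigma> = {m. (\<forall>\<xi>. cface \<xi> \<sigma> \<and> \<xi> \<noteq> \<sigma> \<longrightarrow> m \<xi> \<in> carrier (Mod \<M> \<xi>)) \<and>
      (\<forall>\<xi> \<zeta>. cface \<xi> \<sigma> \<and> \<xi> \<noteq> \<sigma> \<longrightarrow> cface \<zeta> \<xi> \<longrightarrow> Res \<M> \<xi> \<zeta> (m \<xi>) = m \<zeta>)}"

definition flabby :: "'a::euclidean_space set set \<Rightarrow> ('a, 'm) amod \<Rightarrow> bool" where
  "flabby \<Sigma> \<M> \<longleftrightarrow> (\<forall>\<sigma>\<in>\<Sigma>. \<forall>m\<in>boundary_sections \<M> \<sigma>.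
      \<exists>x\<in>carrier (Mod \<M> \<sigma>). \<forall>\<xi>. cface \<xi> \<sigma> \<and> \<xi> \<noteq> \<sigma> \<longrightarrow> Res \<M> \<sigma> \<xi> x = m \<xi>)"

definition strongly_injective :: "'a::euclidean_space set set \<Rightarrow> ('a, 'm) amod \<Rightarrow> ('a, 'n) amod \<Rightarrow>
                     ('a set \<Rightarrow> 'm \<Rightarrow> 'n) \<Rightarrow> bool" where
  "strongly_injective \<Sigma> \<M> \<N> \<eta> \<longleftrightarrow> A_hom \<Sigma> \<M> \<N> \<eta> \<and>
     (\<forall>\<sigma>\<in>\<Sigma>. inj_on (\<eta> \<sigma>) (carrier (Mod \<M> \<sigma>))) \<and>
     (\<forall>\<sigma>\<in>\<Sigma>. \<exists>r. graded_hom (A \<sigma>) (Mod \<N> \<sigma>) (Deg \<N> \<sigma>) (Mod \<M> \<sigma>) (Deg \<M> \<sigma>) r \<and>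
                  (\<forall>x\<in>carrier (Mod \<M> \<sigma>). r (\<eta> \<sigma> x) = x))"

end

theory Submission
  imports Defs
begin

lemma add_hom_zero:
  assumes "abelian_group M" "abelian_group N" "f \<in> carrier M \<rightarrow> carrier N"
    "\<forall>x\<in>carrier M. \<forall>y\<in>carrier M. f (x \<oplus>\<^bsub>M\<^esub> y) = f x \<oplus>\<^bsub>N\<^esub> f y"
  shows "f \<zero>\<^bsub>M\<^esub> = \<zero>\<^bsub>N\<^esub>"
proof -
  interpret M: abelian_group M by fact
  interpret N: abelian_group N by fact
  have c: "f \<zero>\<^bsub>M\<^esub> \<in> carrier N" using assms(3) by auto
  have "f \<zero>\<^bsub>M\<^esub> \<oplus>\<^bsub>N\<^esub> f \<zero>\<^bsub>M\<^esub> = f \<zero>\<^bsub>M\<^esub>"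
    using assms(4) by (metis M.zero_closed M.r_zero)
  then show ?thesis using c by (metis N.add.l_cancel_one' N.r_zero)
qed

lemma add_hom_finsum:
  assumes "abelian_group M" "abelian_group N" "f \<in> carrier M \<rightarrow> carrier N"
    "\<forall>x\<in>carrier M. \<forall>y\<in>carrier M. f (x \<oplus>\<^bsub>M\<^esub> y) = f x \<oplus>\<^bsub>N\<^esub> f y"
    "finite S" "g \<in> S \<rightarrow> carrier M"
  shows "f (finsum M g S) = finsum N (\<lambda>i. f (g i)) S"
  using assms(5,6)
proof (induction S rule: finite_induct)
  case empty
  interpret M: abelian_group M by fact
  interpret N: abelian_group N by fact
  show ?case using add_hom_zero[OF assms(1-4)] by (simp add: M.l_neg)
next
  case (insert i S)
  interpret M: abelian_group M by fact
  interpret N: abelian_group N by fact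
  have gi: "g i \<in> carrier M" and gS: "g \<in> S \<rightarrow> carrier M" using insert by auto
  have "f (finsum M g (insert i S)) = f (g i \<oplus>\<^bsub>M\<^esub> finsum M g S)"
    using insert gi gS by simp
  also have "\<dots> = f (g i) \<oplus>\<^bsub>N\<^esub> f (finsum M g S)"
    using assms(4) gi gS by simp
  also have "\<dots> = f (g i) \<oplus>\<^bsub>N\<^esub> finsum N (\<lambda>i. f (g i)) S"
    using insert gS by simp
  also have "\<dots> = finsum N (\<lambda>i. f (g i)) (insert i S)"
    using insert gS assms(3) gi by (subst N.finsum_insert) (auto simp: Pi_def)
  finally show ?case .
qed

lemma add_hom_minus:
  assumes "abelian_group M" "abelian_group N" "f \<in> carrier M \<rightarrow> carrier N"
    "\<forall>x\<in>carrier M. \<forall>y\<in>carrier M. f (x \<oplus>\<^bsub>M\<^esub> y) = f x \<oplus>\<^bsub>N\<^esub> f y"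
    "x \<in> carrier M" "y \<in> carrier M"
  shows "f (x \<ominus>\<^bsub>M\<^esub> y) = f x \<ominus>\<^bsub>N\<^esub> f y"
proof -
  interpret M: abelian_group M by fact
  interpret N: abelian_group N by fact
  have fy: "f y \<in> carrier N" "f (\<ominus>\<^bsub>M\<^esub> y) \<in> carrier N" using assms by auto
  have "f (\<ominus>\<^bsub>M\<^esub> y) \<oplus>\<^bsub>N\<^esub> f y = f (\<ominus>\<^bsub>M\<^esub> y \<oplus>\<^bsub>M\<^esub> y)"
    using assms(4,6) by simp
  also have "\<dots> = \<zero>\<^bsub>N\<^esub>" using assms(6) add_hom_zero[OF assms(1-4)] by (simp add: M.l_neg)
  finally have "\<ominus>\<^bsub>N\<^esub> f y = f (\<ominus>\<^bsub>M\<^esub> y)"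
    using fy by (intro N.minus_equality) auto
  then show ?thesis using assms(4,5,6)
    by (simp add: a_minus_def)
qed


section \<open>Graded modules: homogeneous components\<close>

definition gcomp :: "('r, 'm) module \<Rightarrow> (int \<Rightarrow> 'm set) \<Rightarrow> 'm \<Rightarrow> int \<Rightarrow> 'm" where
  "gcomp M Mh x = (THE c. (\<forall>d. c d \<in> Mh d) \<and> finite {d. c d \<noteq> \<zero>\<^bsub>M\<^esub>} \<and>
         x = (\<Oplus>\<^bsub>M\<^esub>d\<in>{d. c d \<noteq> \<zero>\<^bsub>M\<^esub>}. c d))"

definition gsupp :: "('r, 'm) module \<Rightarrow> (int \<Rightarrow> 'm set) \<Rightarrow> 'm \<Rightarrow> int set" where
  "gsupp M Mh x = {d. gcomp M Mh x d \<noteq> \<zero>\<^bsub>M\<^esub>}"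

lemma gm_module: "graded_module R Rh M Mh \<Longrightarrow> module R M"
  by (simp add: graded_module_def)

lemma gm_abelian: "graded_module R Rh M Mh \<Longrightarrow> abelian_group M"
  by (simp add: graded_module_def module_def)

lemma gm_cring: "graded_module R Rh M Mh \<Longrightarrow> cring R"
  by (simp add: graded_module_def module_def)

lemma gm_sub: "graded_module R Rh M Mh \<Longrightarrow> subgroup (Mh d) (add_monoid M)"
  by (simp add: graded_module_def)

lemma gm_subset:
  assumes gm: "graded_module R Rh M Mh" and x: "x \<in> Mh d" shows "x \<in> carrier M"
proof -
  have "Mh d \<subseteq> carrier (add_monoid M)" by (rule subgroup.subset[OF gm_sub[OF gm]])
  then show ?thesis using x by auto
qed

lemma gm_zero:
  assumes gm: "graded_module R Rh M Mh" shows "\<zero>\<^bsub>M\<^esub> \<in> Mh d"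
proof -
  have "one (add_monoid M) \<in> Mh d" by (rule subgroup.one_closed[OF gm_sub[OF gm]])
  then show ?thesis by simp
qed

lemma gm_add:
  assumes gm: "graded_module R Rh M Mh" and x: "x \<in> Mh d" and y: "y \<in> Mh d"
  shows "x \<oplus>\<^bsub>M\<^esub> y \<in> Mh d"
proof -
  have "mult (add_monoid M) x y \<in> Mh d" by (rule subgroup.m_closed[OF gm_sub[OF gm] x y])
  then show ?thesis by simp
qed

lemma gm_inv:
  assumes gm: "graded_module R Rh M Mh" and x: "x \<in> Mh d"
  shows "\<ominus>\<^bsub>M\<^esub> x \<in> Mh d"
  unfolding a_inv_def by (rule subgroup.m_inv_closed[OF gm_sub[OF gm] x])

lemma gm_minus: "graded_module R Rh M Mh \<Longrightarrow> x \<in> Mh d \<Longrightarrow> y \<in> Mh d \<Longrightarrow> x \<ominus>\<^bsub>M\<^esub> y \<in> Mh d"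
  by (simp add: a_minus_def gm_add gm_inv)

lemma gm_smult: "graded_module R Rh M Mh \<Longrightarrow> a \<in> Rh e \<Longrightarrow> x \<in> Mh d \<Longrightarrow> a \<odot>\<^bsub>M\<^esub> x \<in> Mh (e + d)"
  by (simp add: graded_module_def)

lemma gcomp_spec:
  assumes gm: "graded_module R Rh M Mh" and x: "x \<in> carrier M"
  shows "(\<forall>d. gcomp M Mh x d \<in> Mh d) \<and> finite (gsupp M Mh x) \<and>
         x = finsum M (gcomp M Mh x) (gsupp M Mh x)"
proof -
  from gm x have "\<exists>!c. (\<forall>d. c d \<in> Mh d) \<and> finite {d. c d \<noteq> \<zero>\<^bsub>M\<^esub>} \<and>
         x = (\<Oplus>\<^bsub>M\<^esub>d\<in>{d. c d \<noteq> \<zero>\<^bsub>M\<^esub>}. c d)" by (simp add: graded_module_def)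
  then have "(\<forall>d. gcomp M Mh x d \<in> Mh d) \<and> finite {d. gcomp M Mh x d \<noteq> \<zero>\<^bsub>M\<^esub>} \<and>
         x = (\<Oplus>\<^bsub>M\<^esub>d\<in>{d. gcomp M Mh x d \<noteq> \<zero>\<^bsub>M\<^esub>}. gcomp M Mh x d)"
    unfolding gcomp_def by (rule theI')
  then show ?thesis unfolding gsupp_def by blast
qed

lemma gcomp_in: "graded_module R Rh M Mh \<Longrightarrow> x \<in> carrier M \<Longrightarrow> gcomp M Mh x d \<in> Mh d"
  using gcomp_spec[of R Rh M Mh x] by blast

lemma gcomp_carrier: "graded_module R Rh M Mh \<Longrightarrow> x \<in> carrier M \<Longrightarrow> gcomp M Mh x d \<in> carrier M"
  by (rule gm_subset[OF _ gcomp_in])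

lemma gsupp_finite: "graded_module R Rh M Mh \<Longrightarrow> x \<in> carrier M \<Longrightarrow> finite (gsupp M Mh x)"
  using gcomp_spec[of R Rh M Mh x] by blast

lemma gcomp_unique:
  assumes gm: "graded_module R Rh M Mh"
    and c: "\<And>d. c d \<in> Mh d" and S: "finite S" and out: "\<And>d. d \<notin> S \<Longrightarrow> c d = \<zero>\<^bsub>M\<^esub>"
    and x: "x = finsum M c S"
  shows "gcomp M Mh x = c"
proof -
  interpret M: abelian_group M using gm_abelian[OF gm] .
  have cc: "\<And>d. c d \<in> carrier M" using c gm_subset[OF gm] by blast
  have sub: "{d. c d \<noteq> \<zero>\<^bsub>M\<^esub>} \<subseteq> S" using out by blast
  have fin: "finite {d. c d \<noteq> \<zero>\<^bsub>M\<^esub>}" using sub S finite_subset by blast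
  have xe: "x = (\<Oplus>\<^bsub>M\<^esub>d\<in>{d. c d \<noteq> \<zero>\<^bsub>M\<^esub>}. c d)"
    unfolding x using S sub cc
    by (intro M.add.finprod_mono_neutral_cong_right) auto
  have xc: "x \<in> carrier M" unfolding x using cc by (intro M.finsum_closed) auto
  from gm xc have ex: "\<exists>!c. (\<forall>d. c d \<in> Mh d) \<and> finite {d. c d \<noteq> \<zero>\<^bsub>M\<^esub>} \<and>
         x = (\<Oplus>\<^bsub>M\<^esub>d\<in>{d. c d \<noteq> \<zero>\<^bsub>M\<^esub>}. c d)" by (simp add: graded_module_def)
  show ?thesis unfolding gcomp_def
    by (rule the1_equality[OF ex]) (intro conjI allI c fin xe)
qed

lemma gcomp_sum:
  assumes gm: "graded_module R Rh M Mh" and x: "x \<in> carrier M" and S: "finite S"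
    and sub: "gsupp M Mh x \<subseteq> S"
  shows "x = finsum M (gcomp M Mh x) S"
proof -
  interpret M: abelian_group M using gm_abelian[OF gm] .
  have "x = finsum M (gcomp M Mh x) (gsupp M Mh x)" using gcomp_spec[OF gm x] by blast
  also have "\<dots> = finsum M (gcomp M Mh x) S"
    using S sub gcomp_carrier[OF gm x]
    by (intro M.add.finprod_mono_neutral_cong_left) (auto simp: gsupp_def)
  finally show ?thesis .
qed

lemma gcomp_homog:
  assumes gm: "graded_module R Rh M Mh" and x: "x \<in> Mh e"
  shows "gcomp M Mh x d = (if d = e then x else \<zero>\<^bsub>M\<^esub>)"
proof -
  interpret M: abelian_group M using gm_abelian[OF gm] .
  have xc: "x \<in> carrier M" using gm_subset[OF gm x] .
  have s: "x = finsum M (\<lambda>d. if d = e then x else \<zero>\<^bsub>M\<^esub>) {e}"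
    using xc by simp
  have "gcomp M Mh x = (\<lambda>d. if d = e then x else \<zero>\<^bsub>M\<^esub>)"
    by (rule gcomp_unique[OF gm _ _ _ s]) (simp_all add: x gm_zero[OF gm])
  then show ?thesis by simp
qed

lemma gcomp_zero:
  assumes gm: "graded_module R Rh M Mh"
  shows "gcomp M Mh \<zero>\<^bsub>M\<^esub> d = \<zero>\<^bsub>M\<^esub>"
  using gcomp_homog[OF gm gm_zero[OF gm, of 0]] by simp

lemma gcomp_add:
  assumes gm: "graded_module R Rh M Mh" and x: "x \<in> carrier M" and y: "y \<in> carrier M"
  shows "gcomp M Mh (x \<oplus>\<^bsub>M\<^esub> y) d = gcomp M Mh x d \<oplus>\<^bsub>M\<^esub> gcomp M Mh y d"
proof -
  interpret M: abelian_group M using gm_abelian[OF gm] .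
  let ?S = "gsupp M Mh x \<union> gsupp M Mh y"
  have S: "finite ?S" using gsupp_finite[OF gm x] gsupp_finite[OF gm y] by blast
  have cx: "\<And>d. gcomp M Mh x d \<in> carrier M" and cy: "\<And>d. gcomp M Mh y d \<in> carrier M"
    using gcomp_carrier[OF gm] x y by auto
  have "x \<oplus>\<^bsub>M\<^esub> y = finsum M (gcomp M Mh x) ?S \<oplus>\<^bsub>M\<^esub> finsum M (gcomp M Mh y) ?S"
    using gcomp_sum[OF gm x S] gcomp_sum[OF gm y S] by auto
  also have "\<dots> = finsum M (\<lambda>d. gcomp M Mh x d \<oplus>\<^bsub>M\<^esub> gcomp M Mh y d) ?S"
    using cx cy by (simp add: M.finsum_addf Pi_def)
  finally have e: "x \<oplus>\<^bsub>M\<^esub> y = finsum M (\<lambda>d. gcomp M Mh x d \<oplus>\<^bsub>M\<^esub> gcomp M Mh y d) ?S" .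
  have "gcomp M Mh (x \<oplus>\<^bsub>M\<^esub> y) = (\<lambda>d. gcomp M Mh x d \<oplus>\<^bsub>M\<^esub> gcomp M Mh y d)"
    by (rule gcomp_unique[OF gm _ S _ e])
       (use gm_add[OF gm] gcomp_in[OF gm x] gcomp_in[OF gm y] in \<open>auto simp: gsupp_def\<close>)
  then show ?thesis by simp
qed


lemma gcomp_map:
  assumes gmM: "graded_module R Rh M Mh" and gmN: "graded_module R' Rh' N Nh"
    and f: "f \<in> carrier M \<rightarrow> carrier N"
    and add: "\<forall>x\<in>carrier M. \<forall>y\<in>carrier M. f (x \<oplus>\<^bsub>M\<^esub> y) = f x \<oplus>\<^bsub>N\<^esub> f y"
    and deg: "\<And>d. f ` Mh d \<subseteq> Nh d" and x: "x \<in> carrier M"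
  shows "gcomp N Nh (f x) = (\<lambda>d. f (gcomp M Mh x d))"
proof -
  interpret M: abelian_group M using gm_abelian[OF gmM] .
  interpret N: abelian_group N using gm_abelian[OF gmN] .
  let ?S = "gsupp M Mh x"
  have S: "finite ?S" using gsupp_finite[OF gmM x] .
  have "f x = f (finsum M (gcomp M Mh x) ?S)" using gcomp_spec[OF gmM x] by metis
  also have "\<dots> = finsum N (\<lambda>d. f (gcomp M Mh x d)) ?S"
    by (rule add_hom_finsum[OF gm_abelian[OF gmM] gm_abelian[OF gmN] f add S])
       (use gcomp_carrier[OF gmM x] in auto)
  finally have e: "f x = finsum N (\<lambda>d. f (gcomp M Mh x d)) ?S" .
  have f0: "f \<zero>\<^bsub>M\<^esub> = \<zero>\<^bsub>N\<^esub>"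
    by (rule add_hom_zero[OF gm_abelian[OF gmM] gm_abelian[OF gmN] f add])
  show ?thesis
  proof (rule gcomp_unique[OF gmN _ S _ e])
    fix d show "f (gcomp M Mh x d) \<in> Nh d" using deg gcomp_in[OF gmM x] by blast
  next
    fix d assume "d \<notin> ?S" then show "f (gcomp M Mh x d) = \<zero>\<^bsub>N\<^esub>"
      using f0 by (simp add: gsupp_def)
  qed
qed

lemma gcomp_smult:
  assumes gm: "graded_module R Rh M Mh" and Rh: "Rh e \<subseteq> carrier R"
    and a: "a \<in> Rh e" and x: "x \<in> carrier M"
  shows "gcomp M Mh (a \<odot>\<^bsub>M\<^esub> x) = (\<lambda>d. a \<odot>\<^bsub>M\<^esub> gcomp M Mh x (d - e))"
proof -
  interpret M: module R M using gm_module[OF gm] .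
  let ?S = "gsupp M Mh x"
  have S: "finite ?S" using gsupp_finite[OF gm x] .
  have ac: "a \<in> carrier R" using a Rh by blast
  have cc: "\<And>d. gcomp M Mh x d \<in> carrier M" using gcomp_carrier[OF gm x] .
  have "a \<odot>\<^bsub>M\<^esub> x = a \<odot>\<^bsub>M\<^esub> finsum M (gcomp M Mh x) ?S" using gcomp_spec[OF gm x] by metis
  also have "\<dots> = finsum M (\<lambda>d. a \<odot>\<^bsub>M\<^esub> gcomp M Mh x d) ?S"
    using S ac cc by (intro M.finsum_smult_ldistr) auto
  also have "\<dots> = finsum M (\<lambda>d. a \<odot>\<^bsub>M\<^esub> gcomp M Mh x (d - e)) ((\<lambda>d. d + e) ` ?S)"
  proof -
    have inj: "inj_on (\<lambda>d. d + e) ?S" by (simp add: inj_on_def)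
    have cl: "(\<lambda>d. a \<odot>\<^bsub>M\<^esub> gcomp M Mh x (d - e)) \<in> (\<lambda>d. d + e) ` ?S \<rightarrow> carrier M"
      using ac cc by (simp add: Pi_def)
    show ?thesis using M.finsum_reindex[OF cl inj] by simp
  qed
  finally have eq: "a \<odot>\<^bsub>M\<^esub> x = finsum M (\<lambda>d. a \<odot>\<^bsub>M\<^esub> gcomp M Mh x (d - e)) ((\<lambda>d. d + e) ` ?S)" .
  show ?thesis
  proof (rule gcomp_unique[OF gm _ _ _ eq])
    fix d show "a \<odot>\<^bsub>M\<^esub> gcomp M Mh x (d - e) \<in> Mh d"
      using gm_smult[OF gm a gcomp_in[OF gm x, of "d - e"]] by simp
  next
    show "finite ((\<lambda>d. d + e) ` ?S)" using S by simp
  next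
    fix d assume "d \<notin> (\<lambda>d. d + e) ` ?S"
    then have "d - e \<notin> ?S"
    proof (intro notI)
      assume "d - e \<in> ?S"
      then have "(d - e) + e \<in> (\<lambda>d. d + e) ` ?S" by (rule imageI)
      then show False using \<open>d \<notin> (\<lambda>d. d + e) ` ?S\<close> by simp
    qed
    then show "a \<odot>\<^bsub>M\<^esub> gcomp M Mh x (d - e) = \<zero>\<^bsub>M\<^esub>" using ac by (simp add: gsupp_def)
  qed
qed


lemma rs_in_A: "f \<in> polyfun \<Longrightarrow> rs \<tau> f \<in> carrier (A \<tau>)"
  by (simp add: A_def)

lemma A_carrier_iff: "a \<in> carrier (A \<tau>) \<longleftrightarrow> (\<exists>f\<in>polyfun. a = rs \<tau> f)"
  by (auto simp: A_def)

lemma Ahom_carrier: "Ahom \<tau> e \<subseteq> carrier (A \<tau>)"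
  by (auto simp: Ahom_def)

lemma Ahom_mult:
  assumes g1: "g1 \<in> Ahom \<sigma> e1" and g2: "g2 \<in> Ahom \<sigma> e2"
  shows "(\<lambda>x. g1 x * g2 x) \<in> Ahom \<sigma> (e1 + e2)"
proof -
  obtain p1 where p1: "p1 \<in> polyfun" "g1 = rs \<sigma> p1" using g1 by (auto simp: Ahom_def A_def)
  obtain p2 where p2: "p2 \<in> polyfun" "g2 = rs \<sigma> p2" using g2 by (auto simp: Ahom_def A_def)
  have "(\<lambda>x. g1 x * g2 x) = rs \<sigma> (\<lambda>x. p1 x * p2 x)"
    using p1 p2 by (auto simp: rs_def)
  then have c: "(\<lambda>x. g1 x * g2 x) \<in> carrier (A \<sigma>)"
    using p1 p2 polyfun.mult[OF p1(1) p2(1)] by (simp add: A_def)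
  show ?thesis
  proof (cases "g1 = (\<lambda>x. 0) \<or> g2 = (\<lambda>x. 0)")
    case True
    then have "(\<lambda>x. g1 x * g2 x) = (\<lambda>x. 0)" by auto
    then show ?thesis using c by (simp add: Ahom_def)
  next
    case False
    then obtain k1 k2 where k1: "e1 = 2 * int k1" "\<forall>t::real. \<forall>x\<in>span \<sigma>. g1 (t *\<^sub>R x) = complex_of_real t ^ k1 * g1 x"
      and k2: "e2 = 2 * int k2" "\<forall>t::real. \<forall>x\<in>span \<sigma>. g2 (t *\<^sub>R x) = complex_of_real t ^ k2 * g2 x"
      using g1 g2 by (auto simp: Ahom_def)
    have "e1 + e2 = 2 * int (k1 + k2)" using k1 k2 by simp
    moreover have "\<forall>t::real. \<forall>x\<in>span \<sigma>. g1 (t *\<^sub>R x) * g2 (t *\<^sub>R x) = complex_of_real t ^ (k1 + k2) * (g1 x * g2 x)"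
      using k1(2) k2(2) by (simp add: power_add)
    ultimately show ?thesis using c unfolding Ahom_def by blast
  qed
qed

lemma sum_list_mult_product:
  "(sum_list (map f xs) :: complex) * sum_list (map g ys) = sum_list (map (\<lambda>(p, q). f p * g q) (List.product xs ys))"
  by (induction xs) (simp_all add: distrib_right sum_list_const_mult o_def)

lemma polyfun_decomp:
  assumes "f \<in> polyfun"
  shows "\<exists>L. (\<forall>p\<in>set L. snd p \<in> Ahom \<sigma> (fst p)) \<and> rs \<sigma> f = (\<lambda>x. sum_list (map (\<lambda>p. snd p x) L))"
  using assms
proof (induction rule: polyfun.induct)
  case (const c)
  have "rs \<sigma> (\<lambda>x. c) \<in> Ahom \<sigma> 0"
    unfolding Ahom_def using polyfun.const[of c]
    by (auto simp: A_def rs_def span_mul intro!: exI[of _ 0])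
  then show ?case by (intro exI[of _ "[(0, rs \<sigma> (\<lambda>x. c))]"]) auto
next
  case (lin v)
  have "rs \<sigma> (\<lambda>x. complex_of_real (v \<bullet> x)) \<in> Ahom \<sigma> 2"
    unfolding Ahom_def using polyfun.lin[of v]
    by (auto simp: A_def rs_def span_mul intro!: exI[of _ 1])
  then show ?case by (intro exI[of _ "[(2, rs \<sigma> (\<lambda>x. complex_of_real (v \<bullet> x)))]"]) auto
next
  case (add f g)
  then obtain L1 L2 where L1: "\<forall>p\<in>set L1. snd p \<in> Ahom \<sigma> (fst p)" "rs \<sigma> f = (\<lambda>x. sum_list (map (\<lambda>p. snd p x) L1))"
    and L2: "\<forall>p\<in>set L2. snd p \<in> Ahom \<sigma> (fst p)" "rs \<sigma> g = (\<lambda>x. sum_list (map (\<lambda>p. snd p x) L2))"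
    by blast
  have "rs \<sigma> (\<lambda>x. f x + g x) = (\<lambda>x. rs \<sigma> f x + rs \<sigma> g x)" by (auto simp: rs_def)
  then show ?case using L1 L2 by (intro exI[of _ "L1 @ L2"]) auto
next
  case (mult f g)
  then obtain L1 L2 where L1: "\<forall>p\<in>set L1. snd p \<in> Ahom \<sigma> (fst p)" "rs \<sigma> f = (\<lambda>x. sum_list (map (\<lambda>p. snd p x) L1))"
    and L2: "\<forall>p\<in>set L2. snd p \<in> Ahom \<sigma> (fst p)" "rs \<sigma> g = (\<lambda>x. sum_list (map (\<lambda>p. snd p x) L2))"
    by blast
  let ?L = "map (\<lambda>(p, q). (fst p + fst q, \<lambda>x. snd p x * snd q x)) (List.product L1 L2)"
  have "rs \<sigma> (\<lambda>x. f x * g x) = (\<lambda>x. rs \<sigma> f x * rs \<sigma> g x)" by (auto simp: rs_def)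
  also have "\<dots> = (\<lambda>x. sum_list (map (\<lambda>p. snd p x) ?L))"
    unfolding L1(2) L2(2) sum_list_mult_product
    by (simp add: o_def case_prod_beta')
  finally have e: "rs \<sigma> (\<lambda>x. f x * g x) = (\<lambda>x. sum_list (map (\<lambda>p. snd p x) ?L))" .
  have "\<forall>p\<in>set ?L. snd p \<in> Ahom \<sigma> (fst p)"
    using L1(1) L2(1) by (auto intro!: Ahom_mult)
  then show ?case using e by blast
qed

lemma A_foldr:
  "foldr (\<lambda>p acc. snd p \<oplus>\<^bsub>A \<sigma>\<^esub> acc) L \<zero>\<^bsub>A \<sigma>\<^esub> = (\<lambda>x. sum_list (map (\<lambda>p. snd p x) L))"
  by (induction L) (simp_all add: A_def)

lemma A_decomp:
  assumes "a \<in> carrier (A \<sigma>)"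
  shows "\<exists>L. (\<forall>p\<in>set L. snd p \<in> Ahom \<sigma> (fst p)) \<and> a = foldr (\<lambda>p acc. snd p \<oplus>\<^bsub>A \<sigma>\<^esub> acc) L \<zero>\<^bsub>A \<sigma>\<^esub>"
proof -
  obtain f where f: "f \<in> polyfun" "a = rs \<sigma> f" using assms by (auto simp: A_def)
  show ?thesis using polyfun_decomp[OF f(1), of \<sigma>] f(2) unfolding A_foldr by blast
qed


section \<open>Graded part of a linear map\<close>

definition gpart :: "('r, 'n) module \<Rightarrow> (int \<Rightarrow> 'n set) \<Rightarrow> ('r, 'i) module \<Rightarrow> (int \<Rightarrow> 'i set) \<Rightarrow>
   ('n \<Rightarrow> 'i) \<Rightarrow> 'n \<Rightarrow> 'i" where
  "gpart N Nh I Ih h n = finsum I (\<lambda>d. gcomp I Ih (h (gcomp N Nh n d)) d) (gsupp N Nh n)"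

context
  fixes R :: "('r, 'x) ring_scheme" and Rh N Nh I Ih h
  assumes gmN: "graded_module R Rh N Nh" and gmI: "graded_module R Rh I Ih"
    and Rhc: "\<And>e. Rh e \<subseteq> carrier R"
    and hc: "h \<in> carrier N \<rightarrow> carrier I"
    and hadd: "\<forall>x\<in>carrier N. \<forall>y\<in>carrier N. h (x \<oplus>\<^bsub>N\<^esub> y) = h x \<oplus>\<^bsub>I\<^esub> h y"
    and hlin: "\<forall>a\<in>carrier R. \<forall>x\<in>carrier N. h (a \<odot>\<^bsub>N\<^esub> x) = a \<odot>\<^bsub>I\<^esub> h x"
begin

lemma h0: "h \<zero>\<^bsub>N\<^esub> = \<zero>\<^bsub>I\<^esub>"
  by (rule add_hom_zero[OF gm_abelian[OF gmN] gm_abelian[OF gmI] hc hadd])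

lemma gpart_term_carrier: "n \<in> carrier N \<Longrightarrow> gcomp I Ih (h (gcomp N Nh n d)) d \<in> carrier I"
  by (intro gcomp_carrier[OF gmI] funcset_mem[OF hc] gcomp_carrier[OF gmN])

lemma gpart_sum:
  assumes n: "n \<in> carrier N" and S: "finite S" and sub: "gsupp N Nh n \<subseteq> S"
  shows "gpart N Nh I Ih h n = finsum I (\<lambda>d. gcomp I Ih (h (gcomp N Nh n d)) d) S"
proof -
  interpret I: abelian_group I using gm_abelian[OF gmI] .
  show ?thesis unfolding gpart_def
  proof (rule I.add.finprod_mono_neutral_cong_left[OF S sub])
    fix d assume "d \<in> S - gsupp N Nh n"
    then have "gcomp N Nh n d = \<zero>\<^bsub>N\<^esub>" by (simp add: gsupp_def)
    then show "gcomp I Ih (h (gcomp N Nh n d)) d = \<zero>\<^bsub>I\<^esub>"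
      using h0 gcomp_zero[OF gmI] by simp
  qed (use gpart_term_carrier[OF n] in auto)
qed

lemma gpart_carrier: "n \<in> carrier N \<Longrightarrow> gpart N Nh I Ih h n \<in> carrier I"
proof -
  interpret I: abelian_group I using gm_abelian[OF gmI] .
  assume n: "n \<in> carrier N"
  show ?thesis unfolding gpart_def using gpart_term_carrier[OF n] by (intro I.finsum_closed) auto
qed

lemma gpart_add:
  assumes x: "x \<in> carrier N" and y: "y \<in> carrier N"
  shows "gpart N Nh I Ih h (x \<oplus>\<^bsub>N\<^esub> y) = gpart N Nh I Ih h x \<oplus>\<^bsub>I\<^esub> gpart N Nh I Ih h y"
proof -
  interpret N: abelian_group N using gm_abelian[OF gmN] .
  interpret I: abelian_group I using gm_abelian[OF gmI] .
  let ?S = "gsupp N Nh x \<union> gsupp N Nh y"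
  have S: "finite ?S" using gsupp_finite[OF gmN x] gsupp_finite[OF gmN y] by blast
  have xy: "x \<oplus>\<^bsub>N\<^esub> y \<in> carrier N" using x y by simp
  have sub: "gsupp N Nh (x \<oplus>\<^bsub>N\<^esub> y) \<subseteq> ?S"
    using gcomp_add[OF gmN x y] by (auto simp: gsupp_def)
  have t: "\<And>d. gcomp I Ih (h (gcomp N Nh (x \<oplus>\<^bsub>N\<^esub> y) d)) d =
      gcomp I Ih (h (gcomp N Nh x d)) d \<oplus>\<^bsub>I\<^esub> gcomp I Ih (h (gcomp N Nh y d)) d"
  proof -
    fix d
    have "h (gcomp N Nh (x \<oplus>\<^bsub>N\<^esub> y) d) = h (gcomp N Nh x d) \<oplus>\<^bsub>I\<^esub> h (gcomp N Nh y d)"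
      using gcomp_add[OF gmN x y] hadd gcomp_carrier[OF gmN x] gcomp_carrier[OF gmN y] by simp
    then show "?thesis d"
      using gcomp_add[OF gmI funcset_mem[OF hc gcomp_carrier[OF gmN x]] funcset_mem[OF hc gcomp_carrier[OF gmN y]]]
      by simp
  qed
  have "gpart N Nh I Ih h (x \<oplus>\<^bsub>N\<^esub> y) = finsum I (\<lambda>d. gcomp I Ih (h (gcomp N Nh (x \<oplus>\<^bsub>N\<^esub> y) d)) d) ?S"
    by (rule gpart_sum[OF xy S sub])
  also have "\<dots> = finsum I (\<lambda>d. gcomp I Ih (h (gcomp N Nh x d)) d \<oplus>\<^bsub>I\<^esub> gcomp I Ih (h (gcomp N Nh y d)) d) ?S"
    using t by simp
  also have "\<dots> = finsum I (\<lambda>d. gcomp I Ih (h (gcomp N Nh x d)) d) ?S \<oplus>\<^bsub>I\<^esub> finsum I (\<lambda>d. gcomp I Ih (h (gcomp N Nh y d)) d) ?S"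
    using gpart_term_carrier[OF x] gpart_term_carrier[OF y] by (intro I.finsum_addf) auto
  also have "\<dots> = gpart N Nh I Ih h x \<oplus>\<^bsub>I\<^esub> gpart N Nh I Ih h y"
    using gpart_sum[OF x S] gpart_sum[OF y S] by auto
  finally show ?thesis .
qed

lemma gpart_smult_hom:
  assumes a: "a \<in> Rh e" and x: "x \<in> carrier N"
  shows "gpart N Nh I Ih h (a \<odot>\<^bsub>N\<^esub> x) = a \<odot>\<^bsub>I\<^esub> gpart N Nh I Ih h x"
proof -
  interpret N: module R N using gm_module[OF gmN] .
  interpret I: module R I using gm_module[OF gmI] .
  have ac: "a \<in> carrier R" using a Rhc by blast
  let ?S = "gsupp N Nh x"
  let ?S' = "(\<lambda>d. d + e) ` ?S"
  have S: "finite ?S" using gsupp_finite[OF gmN x] .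
  have S': "finite ?S'" using S by simp
  have ax: "a \<odot>\<^bsub>N\<^esub> x \<in> carrier N" using ac x by simp
  have sub: "gsupp N Nh (a \<odot>\<^bsub>N\<^esub> x) \<subseteq> ?S'"
  proof
    fix d assume d: "d \<in> gsupp N Nh (a \<odot>\<^bsub>N\<^esub> x)"
    show "d \<in> ?S'"
    proof (rule ccontr)
      assume nd: "d \<notin> ?S'"
      have "d - e \<notin> ?S"
      proof (intro notI)
        assume "d - e \<in> ?S"
        then have "(d - e) + e \<in> ?S'" by (rule imageI)
        then show False using nd by simp
      qed
      then have "gcomp N Nh x (d - e) = \<zero>\<^bsub>N\<^esub>" by (simp add: gsupp_def)
      then show False using d gcomp_smult[OF gmN Rhc a x] ac by (simp add: gsupp_def)
    qed
  qed
  have t: "\<And>d. gcomp I Ih (h (gcomp N Nh (a \<odot>\<^bsub>N\<^esub> x) d)) d =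
      a \<odot>\<^bsub>I\<^esub> gcomp I Ih (h (gcomp N Nh x (d - e))) (d - e)"
  proof -
    fix d
    have hc': "h (gcomp N Nh x (d - e)) \<in> carrier I"
      by (intro funcset_mem[OF hc] gcomp_carrier[OF gmN x])
    have "h (gcomp N Nh (a \<odot>\<^bsub>N\<^esub> x) d) = a \<odot>\<^bsub>I\<^esub> h (gcomp N Nh x (d - e))"
      using gcomp_smult[OF gmN Rhc a x] hlin ac gcomp_carrier[OF gmN x] by simp
    then show "?thesis d" using gcomp_smult[OF gmI Rhc a hc'] by simp
  qed
  have "gpart N Nh I Ih h (a \<odot>\<^bsub>N\<^esub> x) = finsum I (\<lambda>d. gcomp I Ih (h (gcomp N Nh (a \<odot>\<^bsub>N\<^esub> x) d)) d) ?S'"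
    by (rule gpart_sum[OF ax S' sub])
  also have "\<dots> = finsum I (\<lambda>d. a \<odot>\<^bsub>I\<^esub> gcomp I Ih (h (gcomp N Nh x (d - e))) (d - e)) ?S'"
    using t by simp
  also have "\<dots> = finsum I (\<lambda>d. a \<odot>\<^bsub>I\<^esub> gcomp I Ih (h (gcomp N Nh x d)) d) ?S"
  proof -
    have inj: "inj_on (\<lambda>d. d + e) ?S" by (simp add: inj_on_def)
    have cl: "(\<lambda>d. a \<odot>\<^bsub>I\<^esub> gcomp I Ih (h (gcomp N Nh x (d - e))) (d - e)) \<in> ?S' \<rightarrow> carrier I"
      using ac gpart_term_carrier[OF x] by (simp add: Pi_def)
    show ?thesis using I.finsum_reindex[OF cl inj] by simp
  qed
  also have "\<dots> = a \<odot>\<^bsub>I\<^esub> gpart N Nh I Ih h x"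
    unfolding gpart_def using S ac gpart_term_carrier[OF x]
    by (intro I.finsum_smult_ldistr[symmetric]) auto
  finally show ?thesis .
qed

lemma gpart_smult:
  assumes decomp: "\<forall>a\<in>carrier R. \<exists>L. (\<forall>p\<in>set L. snd p \<in> Rh (fst p)) \<and>
        a = foldr (\<lambda>p acc. snd p \<oplus>\<^bsub>R\<^esub> acc) L \<zero>\<^bsub>R\<^esub>"
    and a: "a \<in> carrier R" and x: "x \<in> carrier N"
  shows "gpart N Nh I Ih h (a \<odot>\<^bsub>N\<^esub> x) = a \<odot>\<^bsub>I\<^esub> gpart N Nh I Ih h x"
proof -
  interpret N: module R N using gm_module[OF gmN] .
  interpret I: module R I using gm_module[OF gmI] .
  obtain L where L: "\<forall>p\<in>set L. snd p \<in> Rh (fst p)" "a = foldr (\<lambda>p acc. snd p \<oplus>\<^bsub>R\<^esub> acc) L \<zero>\<^bsub>R\<^esub>"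
    using decomp a by blast
  have "\<forall>p\<in>set L. snd p \<in> Rh (fst p) \<Longrightarrow>
     foldr (\<lambda>p acc. snd p \<oplus>\<^bsub>R\<^esub> acc) L \<zero>\<^bsub>R\<^esub> \<in> carrier R \<and>
     gpart N Nh I Ih h (foldr (\<lambda>p acc. snd p \<oplus>\<^bsub>R\<^esub> acc) L \<zero>\<^bsub>R\<^esub> \<odot>\<^bsub>N\<^esub> x) =
       foldr (\<lambda>p acc. snd p \<oplus>\<^bsub>R\<^esub> acc) L \<zero>\<^bsub>R\<^esub> \<odot>\<^bsub>I\<^esub> gpart N Nh I Ih h x"
  proof (induction L)
    case Nil
    have "gsupp N Nh \<zero>\<^bsub>N\<^esub> = {}" by (simp add: gsupp_def gcomp_zero[OF gmN])
    then have "gpart N Nh I Ih h \<zero>\<^bsub>N\<^esub> = \<zero>\<^bsub>I\<^esub>" by (simp add: gpart_def)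
    then show ?case using x gpart_carrier[OF x] by simp
  next
    case (Cons p L)
    let ?b = "foldr (\<lambda>p acc. snd p \<oplus>\<^bsub>R\<^esub> acc) L \<zero>\<^bsub>R\<^esub>"
    have p: "snd p \<in> Rh (fst p)" using Cons.prems by simp
    have pc: "snd p \<in> carrier R" using p Rhc by blast
    have IH: "?b \<in> carrier R" "gpart N Nh I Ih h (?b \<odot>\<^bsub>N\<^esub> x) = ?b \<odot>\<^bsub>I\<^esub> gpart N Nh I Ih h x"
      using Cons by auto
    have "gpart N Nh I Ih h ((snd p \<oplus>\<^bsub>R\<^esub> ?b) \<odot>\<^bsub>N\<^esub> x) =
        gpart N Nh I Ih h (snd p \<odot>\<^bsub>N\<^esub> x \<oplus>\<^bsub>N\<^esub> ?b \<odot>\<^bsub>N\<^esub> x)"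
      using pc IH(1) x by (simp add: N.smult_l_distr)
    also have "\<dots> = gpart N Nh I Ih h (snd p \<odot>\<^bsub>N\<^esub> x) \<oplus>\<^bsub>I\<^esub> gpart N Nh I Ih h (?b \<odot>\<^bsub>N\<^esub> x)"
      using pc IH(1) x by (intro gpart_add) auto
    also have "\<dots> = snd p \<odot>\<^bsub>I\<^esub> gpart N Nh I Ih h x \<oplus>\<^bsub>I\<^esub> ?b \<odot>\<^bsub>I\<^esub> gpart N Nh I Ih h x"
      using gpart_smult_hom[OF p x] IH(2) by simp
    also have "\<dots> = (snd p \<oplus>\<^bsub>R\<^esub> ?b) \<odot>\<^bsub>I\<^esub> gpart N Nh I Ih h x"
      using pc IH(1) gpart_carrier[OF x] by (simp add: I.smult_l_distr)
    finally show ?case using pc IH(1) by simp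
  qed
  then show ?thesis using L by simp
qed

lemma gpart_deg:
  assumes x: "x \<in> Nh e"
  shows "gpart N Nh I Ih h x \<in> Ih e"
proof -
  interpret I: abelian_group I using gm_abelian[OF gmI] .
  have xc: "x \<in> carrier N" using gm_subset[OF gmN x] .
  have sub: "gsupp N Nh x \<subseteq> {e}" using gcomp_homog[OF gmN x] by (auto simp: gsupp_def split: if_splits)
  have "gpart N Nh I Ih h x = finsum I (\<lambda>d. gcomp I Ih (h (gcomp N Nh x d)) d) {e}"
    by (rule gpart_sum[OF xc _ sub]) simp
  also have "\<dots> = gcomp I Ih (h x) e"
    using gpart_term_carrier[OF xc, of e] gcomp_homog[OF gmN x] by simp
  finally show ?thesis using gcomp_in[OF gmI funcset_mem[OF hc xc]] by simp
qed

lemma gpart_graded_hom: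
  assumes decomp: "\<forall>a\<in>carrier R. \<exists>L. (\<forall>p\<in>set L. snd p \<in> Rh (fst p)) \<and>
        a = foldr (\<lambda>p acc. snd p \<oplus>\<^bsub>R\<^esub> acc) L \<zero>\<^bsub>R\<^esub>"
  shows "graded_hom R N Nh I Ih (gpart N Nh I Ih h)"
  unfolding graded_hom_def
  using gpart_carrier gpart_add gpart_smult[OF decomp] gpart_deg by blast

lemma gpart_commute:
  assumes gmJ: "graded_module R' Rh' J Jh"
    and Qc: "Q \<in> carrier I \<rightarrow> carrier J"
    and Qadd: "\<forall>x\<in>carrier I. \<forall>y\<in>carrier I. Q (x \<oplus>\<^bsub>I\<^esub> y) = Q x \<oplus>\<^bsub>J\<^esub> Q y"
    and Qdeg: "\<And>d. Q ` Ih d \<subseteq> Jh d"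
    and bc: "\<beta> \<in> carrier N \<rightarrow> carrier J"
    and badd: "\<forall>x\<in>carrier N. \<forall>y\<in>carrier N. \<beta> (x \<oplus>\<^bsub>N\<^esub> y) = \<beta> x \<oplus>\<^bsub>J\<^esub> \<beta> y"
    and bdeg: "\<And>d. \<beta> ` Nh d \<subseteq> Jh d"
    and Qh: "\<And>n. n \<in> carrier N \<Longrightarrow> Q (h n) = \<beta> n"
    and n: "n \<in> carrier N"
  shows "Q (gpart N Nh I Ih h n) = \<beta> n"
proof -
  interpret J: abelian_group J using gm_abelian[OF gmJ] .
  let ?S = "gsupp N Nh n"
  have S: "finite ?S" using gsupp_finite[OF gmN n] .
  have "Q (gpart N Nh I Ih h n) = finsum J (\<lambda>d. Q (gcomp I Ih (h (gcomp N Nh n d)) d)) ?S"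
    unfolding gpart_def
    by (rule add_hom_finsum[OF gm_abelian[OF gmI] gm_abelian[OF gmJ] Qc Qadd S])
       (use gpart_term_carrier[OF n] in auto)
  also have "\<dots> = finsum J (\<lambda>d. \<beta> (gcomp N Nh n d)) ?S"
  proof (rule J.finsum_cong')
    fix d
    have c: "gcomp N Nh n d \<in> carrier N" using gcomp_carrier[OF gmN n] .
    have hc': "h (gcomp N Nh n d) \<in> carrier I" using funcset_mem[OF hc c] .
    have "Q (gcomp I Ih (h (gcomp N Nh n d)) d) = gcomp J Jh (Q (h (gcomp N Nh n d))) d"
      using gcomp_map[OF gmI gmJ Qc Qadd Qdeg hc'] by simp
    also have "\<dots> = gcomp J Jh (\<beta> (gcomp N Nh n d)) d" using Qh c by simp
    also have "\<dots> = \<beta> (gcomp N Nh n d)"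
    proof -
      have "\<beta> (gcomp N Nh n d) \<in> Jh d" using bdeg[of d] gcomp_in[OF gmN n, of d] by blast
      from gcomp_homog[OF gmJ this, of d] show ?thesis by simp
    qed
    finally show "Q (gcomp I Ih (h (gcomp N Nh n d)) d) = \<beta> (gcomp N Nh n d)" .
  next
    show "(\<lambda>d. \<beta> (gcomp N Nh n d)) \<in> ?S \<rightarrow> carrier J"
      using funcset_mem[OF bc gcomp_carrier[OF gmN n]] by blast
  qed simp
  also have "\<dots> = \<beta> (finsum N (gcomp N Nh n) ?S)"
    by (rule add_hom_finsum[OF gm_abelian[OF gmN] gm_abelian[OF gmJ] bc badd S, symmetric])
       (use gcomp_carrier[OF gmN n] in auto)
  also have "\<dots> = \<beta> n"
  proof -
    have "n = finsum N (gcomp N Nh n) ?S" using gcomp_spec[OF gmN n] by blast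
    then show ?thesis by simp
  qed
  finally show ?thesis .
qed

end


section \<open>Lifting along a free module\<close>

lemma free_lift:
  fixes R :: "('r, 'x) ring_scheme" and N :: "('r, 'n) module" and I :: "('r, 'i) module"
    and J :: "'f \<Rightarrow> ('s, 'j) module"
  assumes modN: "module R N" and modI: "module R I"
    and free: "free_module R N"
    and J: "\<And>\<xi>. \<xi> \<in> F \<Longrightarrow> abelian_group (J \<xi>)"
    and Qc: "\<And>\<xi>. \<xi> \<in> F \<Longrightarrow> Q \<xi> \<in> carrier I \<rightarrow> carrier (J \<xi>)"
    and Qadd: "\<And>\<xi>. \<xi> \<in> F \<Longrightarrow> \<forall>x\<in>carrier I. \<forall>y\<in>carrier I. Q \<xi> (x \<oplus>\<^bsub>I\<^esub> y) = Q \<xi> x \<oplus>\<^bsub>J \<xi>\<^esub> Q \<xi> y"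
    and bc: "\<And>\<xi>. \<xi> \<in> F \<Longrightarrow> \<beta> \<xi> \<in> carrier N \<rightarrow> carrier (J \<xi>)"
    and badd: "\<And>\<xi>. \<xi> \<in> F \<Longrightarrow> \<forall>x\<in>carrier N. \<forall>y\<in>carrier N. \<beta> \<xi> (x \<oplus>\<^bsub>N\<^esub> y) = \<beta> \<xi> x \<oplus>\<^bsub>J \<xi>\<^esub> \<beta> \<xi> y"
    and compat: "\<And>\<xi> a x n. \<xi> \<in> F \<Longrightarrow> a \<in> carrier R \<Longrightarrow> x \<in> carrier I \<Longrightarrow> n \<in> carrier N \<Longrightarrow>
        Q \<xi> x = \<beta> \<xi> n \<Longrightarrow> Q \<xi> (a \<odot>\<^bsub>I\<^esub> x) = \<beta> \<xi> (a \<odot>\<^bsub>N\<^esub> n)"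
    and lift: "\<And>n. n \<in> carrier N \<Longrightarrow> \<exists>x\<in>carrier I. \<forall>\<xi>\<in>F. Q \<xi> x = \<beta> \<xi> n"
  shows "\<exists>h. h \<in> carrier N \<rightarrow> carrier I \<and>
     (\<forall>x\<in>carrier N. \<forall>y\<in>carrier N. h (x \<oplus>\<^bsub>N\<^esub> y) = h x \<oplus>\<^bsub>I\<^esub> h y) \<and>
     (\<forall>a\<in>carrier R. \<forall>x\<in>carrier N. h (a \<odot>\<^bsub>N\<^esub> x) = a \<odot>\<^bsub>I\<^esub> h x) \<and>
     (\<forall>\<xi>\<in>F. \<forall>n\<in>carrier N. Q \<xi> (h n) = \<beta> \<xi> n)"
proof -
  interpret N: module R N by fact
  interpret I: module R I by fact
  from free[unfolded free_module_def] obtain B where B0: "finite B \<and> B \<subseteq> carrier N \<and>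
     (\<forall>x\<in>carrier N. \<exists>!a. a \<in> B \<rightarrow>\<^sub>E carrier R \<and> x = (\<Oplus>\<^bsub>N\<^esub>b\<in>B. a b \<odot>\<^bsub>N\<^esub> b))"
    by (rule exE)
  have B: "finite B" "B \<subseteq> carrier N" using B0 by (rule conjunct1, rule conjunct1[OF conjunct2])
  have uniq: "\<And>x. x \<in> carrier N \<Longrightarrow> \<exists>!a. a \<in> B \<rightarrow>\<^sub>E carrier R \<and> x = (\<Oplus>\<^bsub>N\<^esub>b\<in>B. a b \<odot>\<^bsub>N\<^esub> b)"
    using conjunct2[OF conjunct2[OF B0]] by (rule bspec)
  have "\<forall>b\<in>B. \<exists>x. x \<in> carrier I \<and> (\<forall>\<xi>\<in>F. Q \<xi> x = \<beta> \<xi> b)" using lift B(2) by blast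
  then have "\<exists>xb. \<forall>b\<in>B. xb b \<in> carrier I \<and> (\<forall>\<xi>\<in>F. Q \<xi> (xb b) = \<beta> \<xi> b)" by (rule bchoice)
  then obtain xb where xb0: "\<forall>b\<in>B. xb b \<in> carrier I \<and> (\<forall>\<xi>\<in>F. Q \<xi> (xb b) = \<beta> \<xi> b)" by blast
  have xb: "\<And>b. b \<in> B \<Longrightarrow> xb b \<in> carrier I" "\<And>b \<xi>. b \<in> B \<Longrightarrow> \<xi> \<in> F \<Longrightarrow> Q \<xi> (xb b) = \<beta> \<xi> b"
    using xb0 by blast+
  define coef where "coef n = (THE a. a \<in> B \<rightarrow>\<^sub>E carrier R \<and> n = (\<Oplus>\<^bsub>N\<^esub>b\<in>B. a b \<odot>\<^bsub>N\<^esub> b))" for n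
  have coef_spec: "coef n \<in> B \<rightarrow>\<^sub>E carrier R \<and> n = (\<Oplus>\<^bsub>N\<^esub>b\<in>B. coef n b \<odot>\<^bsub>N\<^esub> b)"
    if "n \<in> carrier N" for n
    unfolding coef_def by (rule theI'[OF uniq[OF that]])
  have coef_unique: "coef n = a"
    if "n \<in> carrier N" "a \<in> B \<rightarrow>\<^sub>E carrier R" "n = (\<Oplus>\<^bsub>N\<^esub>b\<in>B. a b \<odot>\<^bsub>N\<^esub> b)" for n a
    unfolding coef_def by (rule the1_equality[OF uniq[OF that(1)]]) (use that in blast)
  have coefc: "coef n b \<in> carrier R" if "n \<in> carrier N" "b \<in> B" for n b
    using coef_spec[OF that(1)] that(2) by blast
  have Bc: "\<And>b. b \<in> B \<Longrightarrow> b \<in> carrier N" using B(2) by blast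
  define h where "h n = (\<Oplus>\<^bsub>I\<^esub>b\<in>B. coef n b \<odot>\<^bsub>I\<^esub> xb b)" for n
  have hc: "h \<in> carrier N \<rightarrow> carrier I"
  proof
    fix n assume n: "n \<in> carrier N"
    show "h n \<in> carrier I" unfolding h_def
      by (rule I.finsum_closed) (use coefc[OF n] xb(1) in simp)
  qed
  have hadd: "h (x \<oplus>\<^bsub>N\<^esub> y) = h x \<oplus>\<^bsub>I\<^esub> h y" if x: "x \<in> carrier N" and y: "y \<in> carrier N" for x y
  proof -
    let ?a = "\<lambda>b\<in>B. coef x b \<oplus>\<^bsub>R\<^esub> coef y b"
    have ac: "?a \<in> B \<rightarrow>\<^sub>E carrier R" using coefc x y by auto
    have "x \<oplus>\<^bsub>N\<^esub> y = (\<Oplus>\<^bsub>N\<^esub>b\<in>B. coef x b \<odot>\<^bsub>N\<^esub> b) \<oplus>\<^bsub>N\<^esub> (\<Oplus>\<^bsub>N\<^esub>b\<in>B. coef y b \<odot>\<^bsub>N\<^esub> b)"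
      using coef_spec[OF x] coef_spec[OF y] by simp
    also have "\<dots> = (\<Oplus>\<^bsub>N\<^esub>b\<in>B. coef x b \<odot>\<^bsub>N\<^esub> b \<oplus>\<^bsub>N\<^esub> coef y b \<odot>\<^bsub>N\<^esub> b)"
      using coefc x y Bc by (intro N.finsum_addf[symmetric]) auto
    also have "\<dots> = (\<Oplus>\<^bsub>N\<^esub>b\<in>B. ?a b \<odot>\<^bsub>N\<^esub> b)"
      using coefc x y Bc by (intro N.finsum_cong') (auto simp: N.smult_l_distr)
    finally have e: "x \<oplus>\<^bsub>N\<^esub> y = (\<Oplus>\<^bsub>N\<^esub>b\<in>B. ?a b \<odot>\<^bsub>N\<^esub> b)" .
    have "coef (x \<oplus>\<^bsub>N\<^esub> y) = ?a" by (rule coef_unique[OF _ ac e]) (use x y in simp)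
    then have "h (x \<oplus>\<^bsub>N\<^esub> y) = (\<Oplus>\<^bsub>I\<^esub>b\<in>B. coef x b \<odot>\<^bsub>I\<^esub> xb b \<oplus>\<^bsub>I\<^esub> coef y b \<odot>\<^bsub>I\<^esub> xb b)"
      unfolding h_def using coefc x y xb(1) by (intro I.finsum_cong') (auto simp: I.smult_l_distr)
    also have "\<dots> = h x \<oplus>\<^bsub>I\<^esub> h y"
      unfolding h_def using coefc x y xb(1) by (intro I.finsum_addf) auto
    finally show ?thesis .
  qed
  have hlin: "h (c \<odot>\<^bsub>N\<^esub> x) = c \<odot>\<^bsub>I\<^esub> h x" if c: "c \<in> carrier R" and x: "x \<in> carrier N" for c x
  proof -
    let ?a = "\<lambda>b\<in>B. c \<otimes>\<^bsub>R\<^esub> coef x b"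
    have ac: "?a \<in> B \<rightarrow>\<^sub>E carrier R" using coefc x c by auto
    have "c \<odot>\<^bsub>N\<^esub> x = c \<odot>\<^bsub>N\<^esub> (\<Oplus>\<^bsub>N\<^esub>b\<in>B. coef x b \<odot>\<^bsub>N\<^esub> b)"
      using coef_spec[OF x] by simp
    also have "\<dots> = (\<Oplus>\<^bsub>N\<^esub>b\<in>B. c \<odot>\<^bsub>N\<^esub> (coef x b \<odot>\<^bsub>N\<^esub> b))"
      using coefc x c Bc B(1) by (intro N.finsum_smult_ldistr) auto
    also have "\<dots> = (\<Oplus>\<^bsub>N\<^esub>b\<in>B. ?a b \<odot>\<^bsub>N\<^esub> b)"
      using coefc x c Bc by (intro N.finsum_cong') (auto simp: N.smult_assoc1)
    finally have e: "c \<odot>\<^bsub>N\<^esub> x = (\<Oplus>\<^bsub>N\<^esub>b\<in>B. ?a b \<odot>\<^bsub>N\<^esub> b)" .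
    have "coef (c \<odot>\<^bsub>N\<^esub> x) = ?a" by (rule coef_unique[OF _ ac e]) (use x c in simp)
    then have "h (c \<odot>\<^bsub>N\<^esub> x) = (\<Oplus>\<^bsub>I\<^esub>b\<in>B. c \<odot>\<^bsub>I\<^esub> (coef x b \<odot>\<^bsub>I\<^esub> xb b))"
      unfolding h_def using coefc x c xb(1) by (intro I.finsum_cong') (auto simp: I.smult_assoc1)
    also have "\<dots> = c \<odot>\<^bsub>I\<^esub> h x"
      unfolding h_def using coefc x c xb(1) B(1) by (intro I.finsum_smult_ldistr[symmetric]) auto
    finally show ?thesis .
  qed
  have hQ: "Q \<xi> (h n) = \<beta> \<xi> n" if \<xi>: "\<xi> \<in> F" and n: "n \<in> carrier N" for \<xi> n
  proof -
    interpret J: abelian_group "J \<xi>" using J[OF \<xi>] .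
    have "Q \<xi> (h n) = (\<Oplus>\<^bsub>J \<xi>\<^esub>b\<in>B. Q \<xi> (coef n b \<odot>\<^bsub>I\<^esub> xb b))"
      unfolding h_def
      by (rule add_hom_finsum[OF I.abelian_group_axioms J[OF \<xi>] Qc[OF \<xi>] Qadd[OF \<xi>] B(1)])
         (use coefc n xb(1) in auto)
    also have "\<dots> = (\<Oplus>\<^bsub>J \<xi>\<^esub>b\<in>B. \<beta> \<xi> (coef n b \<odot>\<^bsub>N\<^esub> b))"
    proof (rule J.finsum_cong')
      show "(\<lambda>b. \<beta> \<xi> (coef n b \<odot>\<^bsub>N\<^esub> b)) \<in> B \<rightarrow> carrier (J \<xi>)"
        using funcset_mem[OF bc[OF \<xi>]] coefc[OF n] Bc by simp
    next
      fix b assume b: "b \<in> B"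
      show "Q \<xi> (coef n b \<odot>\<^bsub>I\<^esub> xb b) = \<beta> \<xi> (coef n b \<odot>\<^bsub>N\<^esub> b)"
        by (rule compat[OF \<xi> coefc[OF n b] xb(1)[OF b] Bc[OF b] xb(2)[OF b \<xi>]])
    qed simp
    also have "\<dots> = \<beta> \<xi> (\<Oplus>\<^bsub>N\<^esub>b\<in>B. coef n b \<odot>\<^bsub>N\<^esub> b)"
      by (rule add_hom_finsum[OF N.abelian_group_axioms J[OF \<xi>] bc[OF \<xi>] badd[OF \<xi>] B(1), symmetric])
         (use coefc n Bc in auto)
    also have "\<dots> = \<beta> \<xi> n" using coef_spec[OF n] by simp
    finally show ?thesis .
  qed
  show ?thesis using hc hadd hlin hQ by blast
qed


lemma gh_comp:
  assumes f: "graded_hom R M Mh N Nh f" and g: "graded_hom R N Nh P Ph g"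
  shows "graded_hom R M Mh P Ph (\<lambda>x. g (f x))"
proof -
  have fc: "f \<in> carrier M \<rightarrow> carrier N" and gc: "g \<in> carrier N \<rightarrow> carrier P"
    using f g by (simp_all add: graded_hom_def)
  show ?thesis unfolding graded_hom_def
  proof (intro conjI ballI allI)
    show "(\<lambda>x. g (f x)) \<in> carrier M \<rightarrow> carrier P" using fc gc by (simp add: Pi_def)
  next
    fix x y assume x: "x \<in> carrier M" and y: "y \<in> carrier M"
    show "g (f (x \<oplus>\<^bsub>M\<^esub> y)) = g (f x) \<oplus>\<^bsub>P\<^esub> g (f y)"
      using f g x y funcset_mem[OF fc x] funcset_mem[OF fc y] by (simp add: graded_hom_def)
  next
    fix a x assume a: "a \<in> carrier R" and x: "x \<in> carrier M"
    show "g (f (a \<odot>\<^bsub>M\<^esub> x)) = a \<odot>\<^bsub>P\<^esub> g (f x)"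
      using f g a x funcset_mem[OF fc x] by (simp add: graded_hom_def)
  next
    fix d
    have "f ` Mh d \<subseteq> Nh d" "g ` Nh d \<subseteq> Ph d" using f g by (simp_all add: graded_hom_def)
    then show "(\<lambda>x. g (f x)) ` Mh d \<subseteq> Ph d" by blast
  qed
qed

lemma gh_id:
  assumes "module R M"
  shows "graded_hom R M Mh M Mh (\<lambda>x. x)"
  unfolding graded_hom_def by (simp add: Pi_def)

lemma gh_add:
  assumes gmN: "graded_module R Rh N Nh"
    and f: "graded_hom R M Mh N Nh f" and g: "graded_hom R M Mh N Nh g"
  shows "graded_hom R M Mh N Nh (\<lambda>x. f x \<oplus>\<^bsub>N\<^esub> g x)"
proof -
  interpret N: module R N using gm_module[OF gmN] .
  have fc: "f \<in> carrier M \<rightarrow> carrier N" and gc: "g \<in> carrier M \<rightarrow> carrier N"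
    using f g by (simp_all add: graded_hom_def)
  show ?thesis unfolding graded_hom_def
  proof (intro conjI ballI allI)
    show "(\<lambda>x. f x \<oplus>\<^bsub>N\<^esub> g x) \<in> carrier M \<rightarrow> carrier N" using fc gc by (simp add: Pi_def)
  next
    fix x y assume x: "x \<in> carrier M" and y: "y \<in> carrier M"
    have e: "f (x \<oplus>\<^bsub>M\<^esub> y) = f x \<oplus>\<^bsub>N\<^esub> f y" "g (x \<oplus>\<^bsub>M\<^esub> y) = g x \<oplus>\<^bsub>N\<^esub> g y"
      using f g x y by (simp_all add: graded_hom_def)
    show "f (x \<oplus>\<^bsub>M\<^esub> y) \<oplus>\<^bsub>N\<^esub> g (x \<oplus>\<^bsub>M\<^esub> y) = f x \<oplus>\<^bsub>N\<^esub> g x \<oplus>\<^bsub>N\<^esub> (f y \<oplus>\<^bsub>N\<^esub> g y)"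
      unfolding e using funcset_mem[OF fc x] funcset_mem[OF fc y] funcset_mem[OF gc x] funcset_mem[OF gc y]
      by (simp add: N.a_ac)
  next
    fix a x assume a: "a \<in> carrier R" and x: "x \<in> carrier M"
    show "f (a \<odot>\<^bsub>M\<^esub> x) \<oplus>\<^bsub>N\<^esub> g (a \<odot>\<^bsub>M\<^esub> x) = a \<odot>\<^bsub>N\<^esub> (f x \<oplus>\<^bsub>N\<^esub> g x)"
      using f g a x funcset_mem[OF fc x] funcset_mem[OF gc x] by (simp add: graded_hom_def N.smult_r_distr)
  next
    fix d
    have "f ` Mh d \<subseteq> Nh d" "g ` Mh d \<subseteq> Nh d" using f g by (simp_all add: graded_hom_def)
    then show "(\<lambda>x. f x \<oplus>\<^bsub>N\<^esub> g x) ` Mh d \<subseteq> Nh d" using gm_add[OF gmN] by blast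
  qed
qed

lemma gh_neg:
  assumes gmN: "graded_module R Rh N Nh"
    and f: "graded_hom R M Mh N Nh f"
  shows "graded_hom R M Mh N Nh (\<lambda>x. \<ominus>\<^bsub>N\<^esub> f x)"
proof -
  interpret N: module R N using gm_module[OF gmN] .
  have fc: "f \<in> carrier M \<rightarrow> carrier N"
    using f by (simp_all add: graded_hom_def)
  show ?thesis unfolding graded_hom_def
  proof (intro conjI ballI allI)
    show "(\<lambda>x. \<ominus>\<^bsub>N\<^esub> f x) \<in> carrier M \<rightarrow> carrier N" using fc by (simp add: Pi_def)
  next
    fix x y assume x: "x \<in> carrier M" and y: "y \<in> carrier M"
    have e: "f (x \<oplus>\<^bsub>M\<^esub> y) = f x \<oplus>\<^bsub>N\<^esub> f y"
      using f x y by (simp_all add: graded_hom_def)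
    show "\<ominus>\<^bsub>N\<^esub> f (x \<oplus>\<^bsub>M\<^esub> y) = \<ominus>\<^bsub>N\<^esub> f x \<oplus>\<^bsub>N\<^esub> \<ominus>\<^bsub>N\<^esub> f y"
      unfolding e using funcset_mem[OF fc x] funcset_mem[OF fc y]
      by (simp add: N.minus_add)
  next
    fix a x assume a: "a \<in> carrier R" and x: "x \<in> carrier M"
    show "\<ominus>\<^bsub>N\<^esub> f (a \<odot>\<^bsub>M\<^esub> x) = a \<odot>\<^bsub>N\<^esub> \<ominus>\<^bsub>N\<^esub> f x"
      using f a x funcset_mem[OF fc x] by (simp add: graded_hom_def N.smult_r_minus)
  next
    fix d
    have "f ` Mh d \<subseteq> Nh d" using f by (simp_all add: graded_hom_def)
    then show "(\<lambda>x. \<ominus>\<^bsub>N\<^esub> f x) ` Mh d \<subseteq> Nh d" using gm_inv[OF gmN] by blast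
  qed
qed

lemma gh_minus:
  assumes gmN: "graded_module R Rh N Nh"
    and f: "graded_hom R M Mh N Nh f" and g: "graded_hom R M Mh N Nh g"
  shows "graded_hom R M Mh N Nh (\<lambda>x. f x \<ominus>\<^bsub>N\<^esub> g x)"
  unfolding a_minus_def by (rule gh_add[OF gmN f gh_neg[OF gmN g]])

lemma gh_zero:
  assumes gmM: "graded_module R Rh M Mh" and gmN: "graded_module R Rh' N Nh"
    and f: "graded_hom R M Mh N Nh f"
  shows "f \<zero>\<^bsub>M\<^esub> = \<zero>\<^bsub>N\<^esub>"
  using f by (intro add_hom_zero[OF gm_abelian[OF gmM] gm_abelian[OF gmN]]) (simp_all add: graded_hom_def)

lemma cface_subset: "cface \<xi> \<tau> \<Longrightarrow> \<xi> \<subseteq> \<tau>"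
  by (simp add: cface_def face_of_imp_subset)

lemma cface_trans: "cface \<zeta> \<xi> \<Longrightarrow> cface \<xi> \<tau> \<Longrightarrow> cface \<zeta> \<tau>"
  unfolding cface_def using face_of_trans by blast

lemma fan_face: "finite_fan \<Sigma> \<Longrightarrow> \<tau> \<in> \<Sigma> \<Longrightarrow> cface \<xi> \<tau> \<Longrightarrow> \<xi> \<in> \<Sigma>"
  unfolding finite_fan_def by blast

lemma rs_carrier:
  assumes a: "a \<in> carrier (A \<sigma>)" and sub: "\<xi> \<subseteq> \<sigma>"
  shows "rs \<xi> a \<in> carrier (A \<xi>)"
proof -
  obtain f where f: "f \<in> polyfun" "a = rs \<sigma> f" using a by (auto simp: A_def)
  have "span \<xi> \<subseteq> span \<sigma>" using sub by (rule span_mono)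
  then have "rs \<xi> a = rs \<xi> f" using f(2) unfolding rs_def by (intro ext) auto
  then show ?thesis using f(1) by (simp add: A_def)
qed

lemma Amod_gm: "A_module \<Sigma> X \<Longrightarrow> \<tau> \<in> \<Sigma> \<Longrightarrow> graded_module (A \<tau>) (Ahom \<tau>) (Mod X \<tau>) (Deg X \<tau>)"
  unfolding A_module_def by blast

lemma Amod_Res:
  assumes "A_module \<Sigma> X" "\<tau> \<in> \<Sigma>" "cface \<xi> \<tau>"
  shows "Res X \<tau> \<xi> \<in> carrier (Mod X \<tau>) \<rightarrow> carrier (Mod X \<xi>)"
    and "\<forall>x\<in>carrier (Mod X \<tau>). \<forall>y\<in>carrier (Mod X \<tau>).
           Res X \<tau> \<xi> (x \<oplus>\<^bsub>Mod X \<tau>\<^esub> y) = Res X \<tau> \<xi> x \<oplus>\<^bsub>Mod X \<xi>\<^esub> Res X \<tau> \<xi> y"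
    and "\<And>a x. a \<in> carrier (A \<tau>) \<Longrightarrow> x \<in> carrier (Mod X \<tau>) \<Longrightarrow>
           Res X \<tau> \<xi> (a \<odot>\<^bsub>Mod X \<tau>\<^esub> x) = rs \<xi> a \<odot>\<^bsub>Mod X \<xi>\<^esub> Res X \<tau> \<xi> x"
    and "\<And>d. Res X \<tau> \<xi> ` Deg X \<tau> d \<subseteq> Deg X \<xi> d"
  using assms unfolding A_module_def by blast+

lemma Amod_Res_id: "A_module \<Sigma> X \<Longrightarrow> \<tau> \<in> \<Sigma> \<Longrightarrow> x \<in> carrier (Mod X \<tau>) \<Longrightarrow> Res X \<tau> \<tau> x = x"
  unfolding A_module_def by blast

lemma Amod_Res_trans: "A_module \<Sigma> X \<Longrightarrow> \<tau> \<in> \<Sigma> \<Longrightarrow> cface \<xi> \<tau> \<Longrightarrow> cface \<zeta> \<xi> \<Longrightarrow>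
    x \<in> carrier (Mod X \<tau>) \<Longrightarrow> Res X \<xi> \<zeta> (Res X \<tau> \<xi> x) = Res X \<tau> \<zeta> x"
  unfolding A_module_def by blast

lemma Ahom_gh: "A_hom \<Sigma> X Y f \<Longrightarrow> \<tau> \<in> \<Sigma> \<Longrightarrow>
    graded_hom (A \<tau>) (Mod X \<tau>) (Deg X \<tau>) (Mod Y \<tau>) (Deg Y \<tau>) (f \<tau>)"
  unfolding A_hom_def by blast

lemma Ahom_compat: "A_hom \<Sigma> X Y f \<Longrightarrow> \<tau> \<in> \<Sigma> \<Longrightarrow> cface \<xi> \<tau> \<Longrightarrow> x \<in> carrier (Mod X \<tau>) \<Longrightarrow>
    f \<xi> (Res X \<tau> \<xi> x) = Res Y \<tau> \<xi> (f \<tau> x)"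
  unfolding A_hom_def by blast


section \<open>The extension step\<close>

lemma extend_step:
  fixes \<Sigma> :: "'a::euclidean_space set set"
    and M :: "('a, 'm) amod" and N :: "('a, 'n) amod" and I :: "('a, 'i) amod"
    and \<eta> :: "'a set \<Rightarrow> 'm \<Rightarrow> 'n" and \<phi> :: "'a set \<Rightarrow> 'm \<Rightarrow> 'i" and \<psi> :: "'a set \<Rightarrow> 'n \<Rightarrow> 'i"
  assumes fan: "finite_fan \<Sigma>" and AM: "A_module \<Sigma> M" and AN: "A_module \<Sigma> N" and AI: "A_module \<Sigma> I"
    and fl: "flabby \<Sigma> I" and si: "strongly_injective \<Sigma> M N \<eta>" and lf: "locally_free \<Sigma> N"
    and phi: "A_hom \<Sigma> M I \<phi>" and \<sigma>: "\<sigma> \<in> \<Sigma>"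
    and psi_gh: "\<And>\<xi>. cface \<xi> \<sigma> \<Longrightarrow> \<xi> \<noteq> \<sigma> \<Longrightarrow>
        graded_hom (A \<xi>) (Mod N \<xi>) (Deg N \<xi>) (Mod I \<xi>) (Deg I \<xi>) (\<psi> \<xi>)"
    and psi_compat: "\<And>\<xi> \<zeta> x. cface \<xi> \<sigma> \<Longrightarrow> \<xi> \<noteq> \<sigma> \<Longrightarrow> cface \<zeta> \<xi> \<Longrightarrow> x \<in> carrier (Mod N \<xi>) \<Longrightarrow>
        \<psi> \<zeta> (Res N \<xi> \<zeta> x) = Res I \<xi> \<zeta> (\<psi> \<xi> x)"
    and psi_eta: "\<And>\<xi> x. cface \<xi> \<sigma> \<Longrightarrow> \<xi> \<noteq> \<sigma> \<Longrightarrow> x \<in> carrier (Mod M \<xi>) \<Longrightarrow> \<psi> \<xi> (\<eta> \<xi> x) = \<phi> \<xi> x"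
  shows "\<exists>f. graded_hom (A \<sigma>) (Mod N \<sigma>) (Deg N \<sigma>) (Mod I \<sigma>) (Deg I \<sigma>) f \<and>
     (\<forall>\<xi>. cface \<xi> \<sigma> \<and> \<xi> \<noteq> \<sigma> \<longrightarrow> (\<forall>n\<in>carrier (Mod N \<sigma>). Res I \<sigma> \<xi> (f n) = \<psi> \<xi> (Res N \<sigma> \<xi> n))) \<and>
     (\<forall>x\<in>carrier (Mod M \<sigma>). f (\<eta> \<sigma> x) = \<phi> \<sigma> x)"
proof -
  define F where "F = {\<xi>. cface \<xi> \<sigma> \<and> \<xi> \<noteq> \<sigma>}"
  have Fd: "\<xi> \<in> F \<longleftrightarrow> cface \<xi> \<sigma> \<and> \<xi> \<noteq> \<sigma>" for \<xi> by (simp add: F_def)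
  have FS: "\<xi> \<in> \<Sigma>" if "\<xi> \<in> F" for \<xi> using fan_face[OF fan \<sigma>] that Fd by blast
  have Ff: "cface \<xi> \<sigma>" "\<xi> \<noteq> \<sigma>" if "\<xi> \<in> F" for \<xi> using that Fd by blast+
  have Fsub: "\<xi> \<subseteq> \<sigma>" if "\<xi> \<in> F" for \<xi> using cface_subset Ff(1)[OF that] by blast
  have gmN: "graded_module (A \<sigma>) (Ahom \<sigma>) (Mod N \<sigma>) (Deg N \<sigma>)" by (rule Amod_gm[OF AN \<sigma>])
  have gmI: "graded_module (A \<sigma>) (Ahom \<sigma>) (Mod I \<sigma>) (Deg I \<sigma>)" by (rule Amod_gm[OF AI \<sigma>])
  have gmM: "graded_module (A \<sigma>) (Ahom \<sigma>) (Mod M \<sigma>) (Deg M \<sigma>)" by (rule Amod_gm[OF AM \<sigma>])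
  have gmIx: "graded_module (A \<xi>) (Ahom \<xi>) (Mod I \<xi>) (Deg I \<xi>)" if "\<xi> \<in> F" for \<xi>
    by (rule Amod_gm[OF AI FS[OF that]])
  have gmNx: "graded_module (A \<xi>) (Ahom \<xi>) (Mod N \<xi>) (Deg N \<xi>)" if "\<xi> \<in> F" for \<xi>
    by (rule Amod_gm[OF AN FS[OF that]])
  interpret Nm: module "A \<sigma>" "Mod N \<sigma>" using gm_module[OF gmN] .
  interpret Im: module "A \<sigma>" "Mod I \<sigma>" using gm_module[OF gmI] .
  have etaA: "A_hom \<Sigma> M N \<eta>" using si unfolding strongly_injective_def by blast
  have eta: "graded_hom (A \<sigma>) (Mod M \<sigma>) (Deg M \<sigma>) (Mod N \<sigma>) (Deg N \<sigma>) (\<eta> \<sigma>)"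
    by (rule Ahom_gh[OF etaA \<sigma>])
  have phis: "graded_hom (A \<sigma>) (Mod M \<sigma>) (Deg M \<sigma>) (Mod I \<sigma>) (Deg I \<sigma>) (\<phi> \<sigma>)"
    by (rule Ahom_gh[OF phi \<sigma>])
  obtain r where r: "graded_hom (A \<sigma>) (Mod N \<sigma>) (Deg N \<sigma>) (Mod M \<sigma>) (Deg M \<sigma>) r"
      "\<forall>x\<in>carrier (Mod M \<sigma>). r (\<eta> \<sigma> x) = x"
    using si \<sigma> unfolding strongly_injective_def by blast
  have rc: "r \<in> carrier (Mod N \<sigma>) \<rightarrow> carrier (Mod M \<sigma>)" using r(1) by (simp add: graded_hom_def)
  have etac: "\<eta> \<sigma> \<in> carrier (Mod M \<sigma>) \<rightarrow> carrier (Mod N \<sigma>)" using eta by (simp add: graded_hom_def)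
  have phic: "\<phi> \<sigma> \<in> carrier (Mod M \<sigma>) \<rightarrow> carrier (Mod I \<sigma>)" using phis by (simp add: graded_hom_def)
  have psic: "\<psi> \<xi> \<in> carrier (Mod N \<xi>) \<rightarrow> carrier (Mod I \<xi>)" if "\<xi> \<in> F" for \<xi>
    using psi_gh[OF Ff[OF that]] by (simp add: graded_hom_def)
  have psiadd: "\<forall>x\<in>carrier (Mod N \<xi>). \<forall>y\<in>carrier (Mod N \<xi>).
      \<psi> \<xi> (x \<oplus>\<^bsub>Mod N \<xi>\<^esub> y) = \<psi> \<xi> x \<oplus>\<^bsub>Mod I \<xi>\<^esub> \<psi> \<xi> y" if "\<xi> \<in> F" for \<xi>
    using psi_gh[OF Ff[OF that]] by (simp add: graded_hom_def)
  have psilin: "\<psi> \<xi> (a \<odot>\<^bsub>Mod N \<xi>\<^esub> x) = a \<odot>\<^bsub>Mod I \<xi>\<^esub> \<psi> \<xi> x"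
    if "\<xi> \<in> F" "a \<in> carrier (A \<xi>)" "x \<in> carrier (Mod N \<xi>)" for \<xi> a x
    using psi_gh[OF Ff[OF that(1)]] that(2,3) by (simp add: graded_hom_def)
  have psideg: "\<psi> \<xi> ` Deg N \<xi> d \<subseteq> Deg I \<xi> d" if "\<xi> \<in> F" for \<xi> d
    using psi_gh[OF Ff[OF that]] by (simp add: graded_hom_def)
  note ResN = Amod_Res[OF AN \<sigma> Ff(1)]
  note ResI = Amod_Res[OF AI \<sigma> Ff(1)]
  note ResM = Amod_Res[OF AM \<sigma> Ff(1)]
  define \<beta> where "\<beta> \<xi> n = \<psi> \<xi> (Res N \<sigma> \<xi> n)" for \<xi> n
  have bc: "\<beta> \<xi> \<in> carrier (Mod N \<sigma>) \<rightarrow> carrier (Mod I \<xi>)" if "\<xi> \<in> F" for \<xi>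
    unfolding \<beta>_def using funcset_mem[OF psic[OF that] funcset_mem[OF ResN(1)[OF that]]] by blast
  have badd: "\<forall>x\<in>carrier (Mod N \<sigma>). \<forall>y\<in>carrier (Mod N \<sigma>).
      \<beta> \<xi> (x \<oplus>\<^bsub>Mod N \<sigma>\<^esub> y) = \<beta> \<xi> x \<oplus>\<^bsub>Mod I \<xi>\<^esub> \<beta> \<xi> y" if "\<xi> \<in> F" for \<xi>
    unfolding \<beta>_def using ResN(2)[OF that] psiadd[OF that] funcset_mem[OF ResN(1)[OF that]] by simp
  have bdeg: "\<beta> \<xi> ` Deg N \<sigma> d \<subseteq> Deg I \<xi> d" if "\<xi> \<in> F" for \<xi> d
    unfolding \<beta>_def using ResN(4)[OF that, of d] psideg[OF that, of d] by blast
  have h_ex: "\<exists>h. h \<in> carrier (Mod N \<sigma>) \<rightarrow> carrier (Mod I \<sigma>) \<and>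
     (\<forall>x\<in>carrier (Mod N \<sigma>). \<forall>y\<in>carrier (Mod N \<sigma>). h (x \<oplus>\<^bsub>Mod N \<sigma>\<^esub> y) = h x \<oplus>\<^bsub>Mod I \<sigma>\<^esub> h y) \<and>
     (\<forall>a\<in>carrier (A \<sigma>). \<forall>x\<in>carrier (Mod N \<sigma>). h (a \<odot>\<^bsub>Mod N \<sigma>\<^esub> x) = a \<odot>\<^bsub>Mod I \<sigma>\<^esub> h x) \<and>
     (\<forall>\<xi>\<in>F. \<forall>n\<in>carrier (Mod N \<sigma>). Res I \<sigma> \<xi> (h n) = \<beta> \<xi> n)"
  proof (rule free_lift[where J="Mod I" and Q="Res I \<sigma>" and \<beta>=\<beta> and F=F])
    show "module (A \<sigma>) (Mod N \<sigma>)" by (rule gm_module[OF gmN])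
    show "module (A \<sigma>) (Mod I \<sigma>)" by (rule gm_module[OF gmI])
    show "free_module (A \<sigma>) (Mod N \<sigma>)" using lf \<sigma> unfolding locally_free_def by blast
    show "\<And>\<xi>. \<xi> \<in> F \<Longrightarrow> abelian_group (Mod I \<xi>)" using gm_abelian[OF gmIx] .
    show "\<And>\<xi>. \<xi> \<in> F \<Longrightarrow> Res I \<sigma> \<xi> \<in> carrier (Mod I \<sigma>) \<rightarrow> carrier (Mod I \<xi>)" using ResI(1) .
    show "\<And>\<xi>. \<xi> \<in> F \<Longrightarrow> \<forall>x\<in>carrier (Mod I \<sigma>). \<forall>y\<in>carrier (Mod I \<sigma>).
        Res I \<sigma> \<xi> (x \<oplus>\<^bsub>Mod I \<sigma>\<^esub> y) = Res I \<sigma> \<xi> x \<oplus>\<^bsub>Mod I \<xi>\<^esub> Res I \<sigma> \<xi> y" using ResI(2) .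
    show "\<And>\<xi>. \<xi> \<in> F \<Longrightarrow> \<beta> \<xi> \<in> carrier (Mod N \<sigma>) \<rightarrow> carrier (Mod I \<xi>)" using bc .
    show "\<And>\<xi>. \<xi> \<in> F \<Longrightarrow> \<forall>x\<in>carrier (Mod N \<sigma>). \<forall>y\<in>carrier (Mod N \<sigma>).
        \<beta> \<xi> (x \<oplus>\<^bsub>Mod N \<sigma>\<^esub> y) = \<beta> \<xi> x \<oplus>\<^bsub>Mod I \<xi>\<^esub> \<beta> \<xi> y" using badd .
  next
    fix \<xi> a x n
    assume \<xi>: "\<xi> \<in> F" and a: "a \<in> carrier (A \<sigma>)" and x: "x \<in> carrier (Mod I \<sigma>)"
      and n: "n \<in> carrier (Mod N \<sigma>)" and e: "Res I \<sigma> \<xi> x = \<beta> \<xi> n"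
    have ra: "rs \<xi> a \<in> carrier (A \<xi>)" by (rule rs_carrier[OF a Fsub[OF \<xi>]])
    have "Res I \<sigma> \<xi> (a \<odot>\<^bsub>Mod I \<sigma>\<^esub> x) = rs \<xi> a \<odot>\<^bsub>Mod I \<xi>\<^esub> Res I \<sigma> \<xi> x"
      by (rule ResI(3)[OF \<xi> a x])
    also have "\<dots> = rs \<xi> a \<odot>\<^bsub>Mod I \<xi>\<^esub> \<psi> \<xi> (Res N \<sigma> \<xi> n)" using e by (simp add: \<beta>_def)
    also have "\<dots> = \<psi> \<xi> (rs \<xi> a \<odot>\<^bsub>Mod N \<xi>\<^esub> Res N \<sigma> \<xi> n)"
      by (rule psilin[OF \<xi> ra funcset_mem[OF ResN(1)[OF \<xi>] n], symmetric])
    also have "\<dots> = \<beta> \<xi> (a \<odot>\<^bsub>Mod N \<sigma>\<^esub> n)" unfolding \<beta>_def using ResN(3)[OF \<xi> a n] by simp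
    finally show "Res I \<sigma> \<xi> (a \<odot>\<^bsub>Mod I \<sigma>\<^esub> x) = \<beta> \<xi> (a \<odot>\<^bsub>Mod N \<sigma>\<^esub> n)" .
  next
    fix n assume n: "n \<in> carrier (Mod N \<sigma>)"
    have bs: "(\<lambda>\<xi>. \<beta> \<xi> n) \<in> boundary_sections I \<sigma>"
      unfolding boundary_sections_def mem_Collect_eq
    proof (intro conjI allI impI)
      fix \<xi> assume "cface \<xi> \<sigma> \<and> \<xi> \<noteq> \<sigma>"
      then have \<xi>: "\<xi> \<in> F" using Fd by blast
      show "\<beta> \<xi> n \<in> carrier (Mod I \<xi>)" using funcset_mem[OF bc[OF \<xi>] n] .
    next
      fix \<xi> \<zeta> assume h1: "cface \<xi> \<sigma> \<and> \<xi> \<noteq> \<sigma>" and \<zeta>: "cface \<zeta> \<xi>"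
      then have \<xi>: "\<xi> \<in> F" using Fd by blast
      have Rn: "Res N \<sigma> \<xi> n \<in> carrier (Mod N \<xi>)" using funcset_mem[OF ResN(1)[OF \<xi>] n] .
      have "Res I \<xi> \<zeta> (\<beta> \<xi> n) = \<psi> \<zeta> (Res N \<xi> \<zeta> (Res N \<sigma> \<xi> n))"
        unfolding \<beta>_def using psi_compat[OF Ff[OF \<xi>] \<zeta> Rn] by simp
      also have "\<dots> = \<beta> \<zeta> n" unfolding \<beta>_def using Amod_Res_trans[OF AN \<sigma> Ff(1)[OF \<xi>] \<zeta> n] by simp
      finally show "Res I \<xi> \<zeta> (\<beta> \<xi> n) = \<beta> \<zeta> n" .
    qed
    have fl': "\<forall>\<sigma>\<in>\<Sigma>. \<forall>m\<in>boundary_sections I \<sigma>. \<exists>x\<in>carrier (Mod I \<sigma>).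
        \<forall>\<xi>. cface \<xi> \<sigma> \<and> \<xi> \<noteq> \<sigma> \<longrightarrow> Res I \<sigma> \<xi> x = m \<xi>"
      using fl unfolding flabby_def .
    have "\<exists>x\<in>carrier (Mod I \<sigma>). \<forall>\<xi>. cface \<xi> \<sigma> \<and> \<xi> \<noteq> \<sigma> \<longrightarrow> Res I \<sigma> \<xi> x = \<beta> \<xi> n"
      using bspec[OF bspec[OF fl' \<sigma>] bs] by simp
    then obtain x where x: "x \<in> carrier (Mod I \<sigma>)" "\<forall>\<xi>. cface \<xi> \<sigma> \<and> \<xi> \<noteq> \<sigma> \<longrightarrow> Res I \<sigma> \<xi> x = \<beta> \<xi> n"
      by (rule bexE)
    show "\<exists>x\<in>carrier (Mod I \<sigma>). \<forall>\<xi>\<in>F. Res I \<sigma> \<xi> x = \<beta> \<xi> n"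
    proof (rule bexI[OF _ x(1)], intro ballI)
      fix \<xi> assume "\<xi> \<in> F"
      then show "Res I \<sigma> \<xi> x = \<beta> \<xi> n" using x(2) Fd by simp
    qed
  qed
  then obtain h where hc: "h \<in> carrier (Mod N \<sigma>) \<rightarrow> carrier (Mod I \<sigma>)"
    and hadd: "\<forall>x\<in>carrier (Mod N \<sigma>). \<forall>y\<in>carrier (Mod N \<sigma>). h (x \<oplus>\<^bsub>Mod N \<sigma>\<^esub> y) = h x \<oplus>\<^bsub>Mod I \<sigma>\<^esub> h y"
    and hlin: "\<forall>a\<in>carrier (A \<sigma>). \<forall>x\<in>carrier (Mod N \<sigma>). h (a \<odot>\<^bsub>Mod N \<sigma>\<^esub> x) = a \<odot>\<^bsub>Mod I \<sigma>\<^esub> h x"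
    and hQ: "\<forall>\<xi>\<in>F. \<forall>n\<in>carrier (Mod N \<sigma>). Res I \<sigma> \<xi> (h n) = \<beta> \<xi> n"
    by blast
  define ch where "ch = gpart (Mod N \<sigma>) (Deg N \<sigma>) (Mod I \<sigma>) (Deg I \<sigma>) h"
  have decomp: "\<forall>a\<in>carrier (A \<sigma>). \<exists>L. (\<forall>p\<in>set L. snd p \<in> Ahom \<sigma> (fst p)) \<and>
        a = foldr (\<lambda>p acc. snd p \<oplus>\<^bsub>A \<sigma>\<^esub> acc) L \<zero>\<^bsub>A \<sigma>\<^esub>"
    using A_decomp by blast
  have chi: "graded_hom (A \<sigma>) (Mod N \<sigma>) (Deg N \<sigma>) (Mod I \<sigma>) (Deg I \<sigma>) ch"
    unfolding ch_def by (rule gpart_graded_hom[OF gmN gmI Ahom_carrier hc hadd hlin decomp])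
  have chiR: "Res I \<sigma> \<xi> (ch n) = \<psi> \<xi> (Res N \<sigma> \<xi> n)" if \<xi>: "\<xi> \<in> F" and n: "n \<in> carrier (Mod N \<sigma>)" for \<xi> n
  proof -
    have "Res I \<sigma> \<xi> (ch n) = \<beta> \<xi> n"
      unfolding ch_def
      by (rule gpart_commute[OF gmN gmI Ahom_carrier hc hadd hlin gmIx[OF \<xi>] ResI(1)[OF \<xi>] ResI(2)[OF \<xi>]
            ResI(4)[OF \<xi>] bc[OF \<xi>] badd[OF \<xi>] bdeg[OF \<xi>] _ n])
         (use hQ \<xi> in blast)
    then show ?thesis by (simp add: \<beta>_def)
  qed
  define f where "f n = \<phi> \<sigma> (r n) \<oplus>\<^bsub>Mod I \<sigma>\<^esub> ch (n \<ominus>\<^bsub>Mod N \<sigma>\<^esub> \<eta> \<sigma> (r n))" for n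
  have k: "graded_hom (A \<sigma>) (Mod N \<sigma>) (Deg N \<sigma>) (Mod N \<sigma>) (Deg N \<sigma>) (\<lambda>n. n \<ominus>\<^bsub>Mod N \<sigma>\<^esub> \<eta> \<sigma> (r n))"
    using gh_minus[OF gmN gh_id[OF gm_module[OF gmN]] gh_comp[OF r(1) eta]] by simp
  have fgh: "graded_hom (A \<sigma>) (Mod N \<sigma>) (Deg N \<sigma>) (Mod I \<sigma>) (Deg I \<sigma>) f"
    unfolding f_def[abs_def]
    by (rule gh_add[OF gmI gh_comp[OF r(1) phis] gh_comp[OF k chi]])
  have chic: "ch \<in> carrier (Mod N \<sigma>) \<rightarrow> carrier (Mod I \<sigma>)" using chi by (simp add: graded_hom_def)
  have fR: "Res I \<sigma> \<xi> (f n) = \<psi> \<xi> (Res N \<sigma> \<xi> n)" if \<xi>: "\<xi> \<in> F" and n: "n \<in> carrier (Mod N \<sigma>)" for \<xi> n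
  proof -
    interpret Ix: abelian_group "Mod I \<xi>" using gm_abelian[OF gmIx[OF \<xi>]] .
    have rn: "r n \<in> carrier (Mod M \<sigma>)" using funcset_mem[OF rc n] .
    have ern: "\<eta> \<sigma> (r n) \<in> carrier (Mod N \<sigma>)" using funcset_mem[OF etac rn] .
    have kn: "n \<ominus>\<^bsub>Mod N \<sigma>\<^esub> \<eta> \<sigma> (r n) \<in> carrier (Mod N \<sigma>)" using n ern by simp
    have Rrn: "Res M \<sigma> \<xi> (r n) \<in> carrier (Mod M \<xi>)" using funcset_mem[OF ResM(1)[OF \<xi>] rn] .
    have Rn: "Res N \<sigma> \<xi> n \<in> carrier (Mod N \<xi>)" using funcset_mem[OF ResN(1)[OF \<xi>] n] .
    have Rern: "Res N \<sigma> \<xi> (\<eta> \<sigma> (r n)) \<in> carrier (Mod N \<xi>)" using funcset_mem[OF ResN(1)[OF \<xi>] ern] .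
    have gmMx: "graded_module (A \<xi>) (Ahom \<xi>) (Mod M \<xi>) (Deg M \<xi>)" by (rule Amod_gm[OF AM FS[OF \<xi>]])
    have phix: "graded_hom (A \<xi>) (Mod M \<xi>) (Deg M \<xi>) (Mod I \<xi>) (Deg I \<xi>) (\<phi> \<xi>)"
      by (rule Ahom_gh[OF phi FS[OF \<xi>]])
    let ?a = "\<phi> \<xi> (Res M \<sigma> \<xi> (r n))"
    let ?b = "\<psi> \<xi> (Res N \<sigma> \<xi> n)"
    have ac: "?a \<in> carrier (Mod I \<xi>)" using phix Rrn by (simp add: graded_hom_def Pi_def)
    have bc': "?b \<in> carrier (Mod I \<xi>)" using funcset_mem[OF psic[OF \<xi>] Rn] .
    have "Res I \<sigma> \<xi> (f n) = Res I \<sigma> \<xi> (\<phi> \<sigma> (r n)) \<oplus>\<^bsub>Mod I \<xi>\<^esub> Res I \<sigma> \<xi> (ch (n \<ominus>\<^bsub>Mod N \<sigma>\<^esub> \<eta> \<sigma> (r n)))"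
      unfolding f_def using ResI(2)[OF \<xi>] funcset_mem[OF phic rn] funcset_mem[OF chic kn] by blast
    also have "Res I \<sigma> \<xi> (\<phi> \<sigma> (r n)) = ?a"
      using Ahom_compat[OF phi \<sigma> Ff(1)[OF \<xi>] rn] by simp
    also have "Res I \<sigma> \<xi> (ch (n \<ominus>\<^bsub>Mod N \<sigma>\<^esub> \<eta> \<sigma> (r n))) = \<psi> \<xi> (Res N \<sigma> \<xi> (n \<ominus>\<^bsub>Mod N \<sigma>\<^esub> \<eta> \<sigma> (r n)))"
      by (rule chiR[OF \<xi> kn])
    also have "Res N \<sigma> \<xi> (n \<ominus>\<^bsub>Mod N \<sigma>\<^esub> \<eta> \<sigma> (r n)) = Res N \<sigma> \<xi> n \<ominus>\<^bsub>Mod N \<xi>\<^esub> Res N \<sigma> \<xi> (\<eta> \<sigma> (r n))"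
      by (rule add_hom_minus[OF gm_abelian[OF gmN] gm_abelian[OF gmNx[OF \<xi>]] ResN(1)[OF \<xi>] ResN(2)[OF \<xi>] n ern])
    also have "\<psi> \<xi> (Res N \<sigma> \<xi> n \<ominus>\<^bsub>Mod N \<xi>\<^esub> Res N \<sigma> \<xi> (\<eta> \<sigma> (r n))) = ?b \<ominus>\<^bsub>Mod I \<xi>\<^esub> \<psi> \<xi> (Res N \<sigma> \<xi> (\<eta> \<sigma> (r n)))"
      by (rule add_hom_minus[OF gm_abelian[OF gmNx[OF \<xi>]] gm_abelian[OF gmIx[OF \<xi>]] psic[OF \<xi>] psiadd[OF \<xi>] Rn Rern])
    also have "Res N \<sigma> \<xi> (\<eta> \<sigma> (r n)) = \<eta> \<xi> (Res M \<sigma> \<xi> (r n))"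
      using Ahom_compat[OF etaA \<sigma> Ff(1)[OF \<xi>] rn] by simp
    also have "\<psi> \<xi> (\<eta> \<xi> (Res M \<sigma> \<xi> (r n))) = ?a"
      by (rule psi_eta[OF Ff[OF \<xi>] Rrn])
    also have "?a \<oplus>\<^bsub>Mod I \<xi>\<^esub> (?b \<ominus>\<^bsub>Mod I \<xi>\<^esub> ?a) = ?b"
    proof -
      have "?a \<oplus>\<^bsub>Mod I \<xi>\<^esub> (?b \<ominus>\<^bsub>Mod I \<xi>\<^esub> ?a) = ?a \<oplus>\<^bsub>Mod I \<xi>\<^esub> (\<ominus>\<^bsub>Mod I \<xi>\<^esub> ?a \<oplus>\<^bsub>Mod I \<xi>\<^esub> ?b)"
        using ac bc' by (simp add: a_minus_def Ix.a_comm)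
      also have "\<dots> = ?b" using ac bc' by (rule Ix.r_neg2)
      finally show ?thesis .
    qed
    finally show ?thesis .
  qed
  have fE: "f (\<eta> \<sigma> x) = \<phi> \<sigma> x" if x: "x \<in> carrier (Mod M \<sigma>)" for x
  proof -
    have ex: "\<eta> \<sigma> x \<in> carrier (Mod N \<sigma>)" using funcset_mem[OF etac x] .
    have "f (\<eta> \<sigma> x) = \<phi> \<sigma> x \<oplus>\<^bsub>Mod I \<sigma>\<^esub> ch (\<eta> \<sigma> x \<ominus>\<^bsub>Mod N \<sigma>\<^esub> \<eta> \<sigma> x)"
      unfolding f_def using r(2) x by simp
    also have "\<eta> \<sigma> x \<ominus>\<^bsub>Mod N \<sigma>\<^esub> \<eta> \<sigma> x = \<zero>\<^bsub>Mod N \<sigma>\<^esub>" using ex by (simp add: Nm.r_neg a_minus_def)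
    also have "ch \<zero>\<^bsub>Mod N \<sigma>\<^esub> = \<zero>\<^bsub>Mod I \<sigma>\<^esub>" by (rule gh_zero[OF gmN gmI chi])
    also have "\<phi> \<sigma> x \<oplus>\<^bsub>Mod I \<sigma>\<^esub> \<zero>\<^bsub>Mod I \<sigma>\<^esub> = \<phi> \<sigma> x" using funcset_mem[OF phic x] by simp
    finally show ?thesis .
  qed
  show ?thesis using fgh fR fE Fd by blast
qed


section \<open>Induction over face-closed subfans\<close>

lemma extend_all:
  fixes \<Sigma> :: "'a::euclidean_space set set"
    and M :: "('a, 'm) amod" and N :: "('a, 'n) amod" and I :: "('a, 'i) amod"
    and \<eta> :: "'a set \<Rightarrow> 'm \<Rightarrow> 'n" and \<phi> :: "'a set \<Rightarrow> 'm \<Rightarrow> 'i"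
  assumes fan: "finite_fan \<Sigma>" and AM: "A_module \<Sigma> M" and AN: "A_module \<Sigma> N" and AI: "A_module \<Sigma> I"
    and fl: "flabby \<Sigma> I" and si: "strongly_injective \<Sigma> M N \<eta>" and lf: "locally_free \<Sigma> N"
    and phi: "A_hom \<Sigma> M I \<phi>"
  shows "S \<subseteq> \<Sigma> \<Longrightarrow> (\<forall>\<tau>\<in>S. \<forall>\<xi>. cface \<xi> \<tau> \<longrightarrow> \<xi> \<in> S) \<Longrightarrow>
    \<exists>\<psi>. (\<forall>\<tau>\<in>S. graded_hom (A \<tau>) (Mod N \<tau>) (Deg N \<tau>) (Mod I \<tau>) (Deg I \<tau>) (\<psi> \<tau>)) \<and>
        (\<forall>\<tau>\<in>S. \<forall>\<xi>. cface \<xi> \<tau> \<longrightarrow> (\<forall>x\<in>carrier (Mod N \<tau>). \<psi> \<xi> (Res N \<tau> \<xi> x) = Res I \<tau> \<xi> (\<psi> \<tau> x))) \<and>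
        (\<forall>\<tau>\<in>S. \<forall>x\<in>carrier (Mod M \<tau>). \<psi> \<tau> (\<eta> \<tau> x) = \<phi> \<tau> x)"
proof (induction "card S" arbitrary: S rule: less_induct)
  case less
  have finS: "finite S" using less.prems(1) fan unfolding finite_fan_def using finite_subset by blast
  show ?case
  proof (cases "S = {}")
    case True
    then show ?thesis by simp
  next
    case False
    obtain \<sigma> where \<sigma>S: "\<sigma> \<in> S" and max: "\<forall>\<tau>\<in>S. \<sigma> \<le> \<tau> \<longrightarrow> \<sigma> = \<tau>"
      using finite_has_maximal[OF finS False] by blast
    have \<sigma>: "\<sigma> \<in> \<Sigma>" using \<sigma>S less.prems(1) by blast
    define S' where "S' = S - {\<sigma>}"
    have card: "card S' < card S" unfolding S'_def using finS \<sigma>S by (rule card_Diff1_less)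
    have S'sub: "S' \<subseteq> \<Sigma>" unfolding S'_def using less.prems(1) by blast
    have notsig: "\<xi> \<noteq> \<sigma>" if "\<tau> \<in> S" "\<tau> \<noteq> \<sigma>" "cface \<xi> \<tau>" for \<tau> \<xi>
    proof
      assume "\<xi> = \<sigma>"
      then have "\<sigma> \<subseteq> \<tau>" using cface_subset[OF that(3)] by simp
      then show False using max that(1,2) by blast
    qed
    have S'closed: "\<forall>\<tau>\<in>S'. \<forall>\<xi>. cface \<xi> \<tau> \<longrightarrow> \<xi> \<in> S'"
    proof (intro ballI allI impI)
      fix \<tau> \<xi> assume \<tau>: "\<tau> \<in> S'" and \<xi>: "cface \<xi> \<tau>"
      have "\<tau> \<in> S" "\<tau> \<noteq> \<sigma>" using \<tau> by (auto simp: S'_def)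
      then show "\<xi> \<in> S'" using less.prems(2) \<xi> notsig unfolding S'_def by blast
    qed
    obtain \<psi>' where P1: "\<forall>\<tau>\<in>S'. graded_hom (A \<tau>) (Mod N \<tau>) (Deg N \<tau>) (Mod I \<tau>) (Deg I \<tau>) (\<psi>' \<tau>)"
      and P2: "\<forall>\<tau>\<in>S'. \<forall>\<xi>. cface \<xi> \<tau> \<longrightarrow> (\<forall>x\<in>carrier (Mod N \<tau>). \<psi>' \<xi> (Res N \<tau> \<xi> x) = Res I \<tau> \<xi> (\<psi>' \<tau> x))"
      and P3: "\<forall>\<tau>\<in>S'. \<forall>x\<in>carrier (Mod M \<tau>). \<psi>' \<tau> (\<eta> \<tau> x) = \<phi> \<tau> x"
      using less.hyps[OF card S'sub S'closed] by blast
    have inS': "\<xi> \<in> S'" if "cface \<xi> \<sigma>" "\<xi> \<noteq> \<sigma>" for \<xi>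
      using less.prems(2) \<sigma>S that unfolding S'_def by blast
    obtain f where f1: "graded_hom (A \<sigma>) (Mod N \<sigma>) (Deg N \<sigma>) (Mod I \<sigma>) (Deg I \<sigma>) f"
      and f2: "\<forall>\<xi>. cface \<xi> \<sigma> \<and> \<xi> \<noteq> \<sigma> \<longrightarrow> (\<forall>n\<in>carrier (Mod N \<sigma>). Res I \<sigma> \<xi> (f n) = \<psi>' \<xi> (Res N \<sigma> \<xi> n))"
      and f3: "\<forall>x\<in>carrier (Mod M \<sigma>). f (\<eta> \<sigma> x) = \<phi> \<sigma> x"
    proof -
      have "\<exists>f. graded_hom (A \<sigma>) (Mod N \<sigma>) (Deg N \<sigma>) (Mod I \<sigma>) (Deg I \<sigma>) f \<and>
         (\<forall>\<xi>. cface \<xi> \<sigma> \<and> \<xi> \<noteq> \<sigma> \<longrightarrow> (\<forall>n\<in>carrier (Mod N \<sigma>). Res I \<sigma> \<xi> (f n) = \<psi>' \<xi> (Res N \<sigma> \<xi> n))) \<and>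
         (\<forall>x\<in>carrier (Mod M \<sigma>). f (\<eta> \<sigma> x) = \<phi> \<sigma> x)"
      proof (rule extend_step[OF fan AM AN AI fl si lf phi \<sigma>])
        fix \<xi> assume "cface \<xi> \<sigma>" "\<xi> \<noteq> \<sigma>"
        then show "graded_hom (A \<xi>) (Mod N \<xi>) (Deg N \<xi>) (Mod I \<xi>) (Deg I \<xi>) (\<psi>' \<xi>)"
          using P1 inS' by blast
      next
        fix \<xi> \<zeta> x assume "cface \<xi> \<sigma>" "\<xi> \<noteq> \<sigma>" "cface \<zeta> \<xi>" "x \<in> carrier (Mod N \<xi>)"
        then show "\<psi>' \<zeta> (Res N \<xi> \<zeta> x) = Res I \<xi> \<zeta> (\<psi>' \<xi> x)"
          using P2 inS' by blast
      next
        fix \<xi> x assume "cface \<xi> \<sigma>" "\<xi> \<noteq> \<sigma>" "x \<in> carrier (Mod M \<xi>)"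
        then show "\<psi>' \<xi> (\<eta> \<xi> x) = \<phi> \<xi> x" using P3 inS' by blast
      qed
      then show ?thesis using that by blast
    qed
    define \<psi> where "\<psi> = \<psi>'(\<sigma> := f)"
    have fc: "f \<in> carrier (Mod N \<sigma>) \<rightarrow> carrier (Mod I \<sigma>)" using f1 by (simp add: graded_hom_def)
    have Q1: "\<forall>\<tau>\<in>S. graded_hom (A \<tau>) (Mod N \<tau>) (Deg N \<tau>) (Mod I \<tau>) (Deg I \<tau>) (\<psi> \<tau>)"
    proof
      fix \<tau> assume "\<tau> \<in> S"
      then show "graded_hom (A \<tau>) (Mod N \<tau>) (Deg N \<tau>) (Mod I \<tau>) (Deg I \<tau>) (\<psi> \<tau>)"
        using f1 P1 unfolding \<psi>_def S'_def by (cases "\<tau> = \<sigma>") auto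
    qed
    have Q2: "\<forall>\<tau>\<in>S. \<forall>\<xi>. cface \<xi> \<tau> \<longrightarrow> (\<forall>x\<in>carrier (Mod N \<tau>). \<psi> \<xi> (Res N \<tau> \<xi> x) = Res I \<tau> \<xi> (\<psi> \<tau> x))"
    proof (intro ballI allI impI)
      fix \<tau> \<xi> x assume \<tau>: "\<tau> \<in> S" and \<xi>: "cface \<xi> \<tau>" and x: "x \<in> carrier (Mod N \<tau>)"
      show "\<psi> \<xi> (Res N \<tau> \<xi> x) = Res I \<tau> \<xi> (\<psi> \<tau> x)"
      proof (cases "\<tau> = \<sigma>")
        case True
        note T = True
        show ?thesis
        proof (cases "\<xi> = \<sigma>")
          case True
          have "Res N \<sigma> \<sigma> x = x" using Amod_Res_id[OF AN \<sigma>] x T by simp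
          moreover have "Res I \<sigma> \<sigma> (f x) = f x" using Amod_Res_id[OF AI \<sigma> funcset_mem[OF fc]] x T by simp
          ultimately show ?thesis using T True by (simp add: \<psi>_def)
        next
          case False
          then show ?thesis using f2 \<xi> x T by (simp add: \<psi>_def)
        qed
      next
        case False
        have "\<xi> \<noteq> \<sigma>" using notsig[OF \<tau> False \<xi>] .
        moreover have "\<tau> \<in> S'" using \<tau> False by (simp add: S'_def)
        ultimately show ?thesis using P2 \<xi> x False by (simp add: \<psi>_def)
      qed
    qed
    have Q3: "\<forall>\<tau>\<in>S. \<forall>x\<in>carrier (Mod M \<tau>). \<psi> \<tau> (\<eta> \<tau> x) = \<phi> \<tau> x"
    proof (intro ballI)
      fix \<tau> x assume "\<tau> \<in> S" "x \<in> carrier (Mod M \<tau>)"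
      then show "\<psi> \<tau> (\<eta> \<tau> x) = \<phi> \<tau> x"
        using f3 P3 unfolding \<psi>_def S'_def by (cases "\<tau> = \<sigma>") auto
    qed
    show ?thesis using Q1 Q2 Q3 by blast
  qed
qed

theorem proposition6p5:
  fixes \<Sigma> :: "'a::euclidean_space set set"
    and \<M> :: "('a, 'm) amod" and \<N> :: "('a, 'n) amod" and \<I> :: "('a, 'i) amod"
    and \<eta> :: "'a set \<Rightarrow> 'm \<Rightarrow> 'n"
  assumes "finite_fan \<Sigma>"
    and "A_module \<Sigma> \<M>" and "A_module \<Sigma> \<N>" and "A_module \<Sigma> \<I>"
    and "flabby \<Sigma> \<I>"
    and "strongly_injective \<Sigma> \<M> \<N> \<eta>"
    and "locally_free \<Sigma> \<N>"
  shows "\<forall>\<phi>. A_hom \<Sigma> \<M> \<I> \<phi> \<longrightarrow>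
           (\<exists>\<psi>. A_hom \<Sigma> \<N> \<I> \<psi> \<and>
                 (\<forall>\<sigma>\<in>\<Sigma>. \<forall>x\<in>carrier (Mod \<M> \<sigma>). \<psi> \<sigma> (\<eta> \<sigma> x) = \<phi> \<sigma> x))"
proof (intro allI impI)
  fix \<phi> assume phi: "A_hom \<Sigma> \<M> \<I> \<phi>"
  have closed: "\<forall>\<tau>\<in>\<Sigma>. \<forall>\<xi>. cface \<xi> \<tau> \<longrightarrow> \<xi> \<in> \<Sigma>" using fan_face[OF assms(1)] by blast
  obtain \<psi> where P1: "\<forall>\<tau>\<in>\<Sigma>. graded_hom (A \<tau>) (Mod \<N> \<tau>) (Deg \<N> \<tau>) (Mod \<I> \<tau>) (Deg \<I> \<tau>) (\<psi> \<tau>)"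
      and P2: "\<forall>\<tau>\<in>\<Sigma>. \<forall>\<xi>. cface \<xi> \<tau> \<longrightarrow> (\<forall>x\<in>carrier (Mod \<N> \<tau>). \<psi> \<xi> (Res \<N> \<tau> \<xi> x) = Res \<I> \<tau> \<xi> (\<psi> \<tau> x))"
      and P3: "\<forall>\<tau>\<in>\<Sigma>. \<forall>x\<in>carrier (Mod \<M> \<tau>). \<psi> \<tau> (\<eta> \<tau> x) = \<phi> \<tau> x"
    using extend_all[OF assms phi subset_refl closed] by blast
  have "A_hom \<Sigma> \<N> \<I> \<psi>" unfolding A_hom_def using P1 P2 by blast
  then show "\<exists>\<psi>. A_hom \<Sigma> \<N> \<I> \<psi> \<and> (\<forall>\<sigma>\<in>\<Sigma>. \<forall>x\<in>carrier (Mod \<M> \<sigma>). \<psi> \<sigma> (\<eta> \<sigma> x) = \<phi> \<sigma> x)"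
    using P3 by blast
qed

end
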